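(* Let $V$ be an $\mathrm{FI}_G$-module generated in degree $\le m$ such that $H_1^{D^{m+1}}(V)=0$. Then $V$ is related in degree $\le m$. In particular, if $V$ is generated in finite degree and $\mathrm{depth}(V)=\infty$, then $V$ is presented in finite degree.
   Context: Fix a commutative ring $k$ and a group $G$. $\mathrm{FI}_G$ is the category with objects $[n]$ ($n\ge0$) and morphisms $[n]\to[m]$ the pairs $(f,g)$ with $f$ injective and $g:[n]\to G$ a map of sets; composition $(f,g)\circ(f',g')=(f\circ f',h)$, $h(x)=g'(x)\,g(f'(x))$. $G_n=\mathfrak S_n\wr G$. An $\mathrm{FI}_G$-module is a functor $V:\mathrm{FI}_G\to\mathrm{Mod}_k$. $M(n)_m=k[\mathrm{Hom}_{\mathrm{FI}_G}([n],[m])]$; for a $k[G_n]$-module $W$, $M(W)_m=W\otimes_{k[G_n]}k[\mathrm{Hom}_{\mathrm{FI}_G}([n],[m])]$; direct sums of these are relatively projective. Generated in degree $\le m$: surjection $\bigoplus M(n_i)\to V$, $n_i\le m$; related in degree $\le r$: exact $0\to K\to M\to V\to0$ with $M$ relatively projective and $K$ generated in degree $\le r$; presented in finite degree: both finite. $\Sigma$ sends $[n]\mapsto[n+1]$ and $(f,g)\mapsto(f_+,g_+)$ ($f_+$ extends $f$ by $n+1\mapsto m+1$, $g_+$ extends $g$ by $n+1\mapsto1_G$); $SV=V\circ\Sigma$; $\iota:V\to SV$ is $V(f^n,\mathbf1)$ in degree $n$ ($f^n$ standard inclusion, $\mathbf1$ trivial). $DV=\mathrm{coker}(\iota)$, $D^a$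 its $a$-th iterate, $H_i^{D^a}$ left derived functors. $\mathrm{depth}(V)=\inf\{a\ge0:H_1^{D^{a+1}}(V)\ne0\}$ ($\inf\emptyset=\infty$). *)

theory Defs
  imports Main "HOL-Library.Function_Algebras" "HOL-Library.Extended_Nat"
begin

text \<open>[n] is rendered as the 0-indexed set {0..<n}. The group G is a type of class group_add
(group written additively: 0 is the identity, + is the group product). A morphism [n] -> [m]
is a pair (f,g) with f injective {0..<n} -> {0..<m} and g : {0..<n} -> G; outside {0..<n}
both components are normalised to 0 so that morphisms are determined by their restriction.\<close>

type_synonym 'g morph = "(nat \<Rightarrow> nat) \<times> (nat \<Rightarrow> 'g)"

definition hom :: "nat \<Rightarrow> nat \<Rightarrow> ('g::group_add) morph set" where
  "hom n m = {(f, g). inj_on f {..<n} \<and> f ` {..<n} \<subseteq> {..<m}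
                      \<and> (\<forall>x\<ge>n. f x = 0) \<and> (\<forall>x\<ge>n. g x = 0)}"

text \<open>comp n psi phi is psi o phi where phi has domain [n];
  (f,g) o (f',g') = (f o f', h) with h(x) = g'(x) g(f'(x)).\<close>
definition comp :: "nat \<Rightarrow> ('g::group_add) morph \<Rightarrow> 'g morph \<Rightarrow> 'g morph" where
  "comp n psi phi = (\<lambda>x. if x < n then fst psi (fst phi x) else 0,
                     \<lambda>x. if x < n then snd phi x + snd psi (fst phi x) else 0)"

definition idm :: "nat \<Rightarrow> ('g::group_add) morph" where
  "idm n = (\<lambda>x. if x < n then x else 0, \<lambda>x. 0)"

definition incl :: "nat \<Rightarrow> ('g::group_add) morph" where
  "incl n = idm n"

text \<open>The shift functor Sigma on a morphism (f,g) : [n] -> [m]: the new point n is sent to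
the new point m, with label 1_G.\<close>
definition sigma :: "nat \<Rightarrow> nat \<Rightarrow> ('g::group_add) morph \<Rightarrow> 'g morph" where
  "sigma n m phi = ((fst phi)(n := m), (snd phi)(n := 0))"

text \<open>A module is given by an ambient k-module type 'u with scalar multiplication sc, carriers
C n (a submodule of 'u), submodules N n of C n to be divided out (the degree-n piece is
C n / N n), and actions act n m phi.\<close>

type_synonym ('u, 'g) sqm = "(nat \<Rightarrow> 'u set) \<times> (nat \<Rightarrow> 'u set) \<times> (nat \<Rightarrow> nat \<Rightarrow> 'g morph \<Rightarrow> 'u \<Rightarrow> 'u)"

definition setplus :: "'u::ab_group_add set \<Rightarrow> 'u set \<Rightarrow> 'u set" where
  "setplus A B = {a + b | a b. a \<in> A \<and> b \<in> B}"

definition is_sqm :: "('k::comm_ring_1 \<Rightarrow> 'u::ab_group_add \<Rightarrow> 'u) \<Rightarrow> ('u, 'g::group_add) sqm \<Rightarrow> bool" where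
  "is_sqm sc X = (case X of (C, N, act) \<Rightarrow>
     module sc
   \<and> (\<forall>n. module.subspace sc (C n) \<and> module.subspace sc (N n) \<and> N n \<subseteq> C n)
   \<and> (\<forall>n m phi. phi \<in> hom n m \<longrightarrow>
         (\<forall>x\<in>C n. act n m phi x \<in> C m) \<and> (\<forall>x\<in>N n. act n m phi x \<in> N m)
       \<and> (\<forall>x\<in>C n. \<forall>y\<in>C n. act n m phi (x + y) = act n m phi x + act n m phi y)
       \<and> (\<forall>c. \<forall>x\<in>C n. act n m phi (sc c x) = sc c (act n m phi x)))
   \<and> (\<forall>n. \<forall>x\<in>C n. act n n (idm n) x - x \<in> N n)
   \<and> (\<forall>n m l phi psi. phi \<in> hom n m \<longrightarrow> psi \<in> hom m l \<longrightarrow>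
         (\<forall>x\<in>C n. act n l (comp n psi phi) x - act m l psi (act n m phi x) \<in> N l)))"

definition fig_module :: "('k::comm_ring_1 \<Rightarrow> 'v::ab_group_add \<Rightarrow> 'v) \<Rightarrow> (nat \<Rightarrow> 'v set)
     \<Rightarrow> (nat \<Rightarrow> nat \<Rightarrow> ('g::group_add) morph \<Rightarrow> 'v \<Rightarrow> 'v) \<Rightarrow> bool" where
  "fig_module sc C act = is_sqm sc (C, (\<lambda>_. {0}), act)"

text \<open>Generated in degree <= m: the image of the map from a direct sum of M(n_i), n_i <= m,
(determined via Yoneda by elements x_i in degree n_i) is everything, i.e. every degree-j piece
is spanned (modulo N j) by the images of elements of degree <= m.\<close>
definition gen_sqm :: "('k::comm_ring_1 \<Rightarrow> 'u::ab_group_add \<Rightarrow> 'u) \<Rightarrow> ('u, 'g::group_add) sqm \<Rightarrow> nat \<Rightarrow> bool" where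
  "gen_sqm sc X m = (case X of (C, N, act) \<Rightarrow>
     (\<forall>j. C j \<subseteq> setplus (module.span sc {act n j phi x | n x phi. n \<le> m \<and> x \<in> C n \<and> phi \<in> hom n j}) (N j)))"

definition generated_in_degree :: "('k::comm_ring_1 \<Rightarrow> 'v::ab_group_add \<Rightarrow> 'v) \<Rightarrow> (nat \<Rightarrow> 'v set)
     \<Rightarrow> (nat \<Rightarrow> nat \<Rightarrow> ('g::group_add) morph \<Rightarrow> 'v \<Rightarrow> 'v) \<Rightarrow> nat \<Rightarrow> bool" where
  "generated_in_degree sc C act m = gen_sqm sc (C, (\<lambda>_. {0}), act) m"

text \<open>DX = coker(iota : X -> SX): (DX)_n = X_{n+1} / iota(X_n), with action through Sigma.\<close>
definition Dop :: "('u::ab_group_add, 'g::group_add) sqm \<Rightarrow> ('u, 'g) sqm" where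
  "Dop X = (case X of (C, N, act) \<Rightarrow>
     (\<lambda>n. C (Suc n),
      \<lambda>n. setplus (N (Suc n)) (act n (Suc n) (incl n) ` C n),
      \<lambda>n m phi. act (Suc n) (Suc m) (sigma n m phi)))"

text \<open>Ambient module of finitely supported k-valued functions with pointwise scaling.\<close>
definition fsc :: "'k::comm_ring_1 \<Rightarrow> ('a \<Rightarrow> 'k) \<Rightarrow> ('a \<Rightarrow> 'k)" where
  "fsc c p = (\<lambda>x. c * p x)"

definition delta :: "'a \<Rightarrow> ('a \<Rightarrow> 'k::comm_ring_1)" where
  "delta a = (\<lambda>y. if y = a then 1 else 0)"

text \<open>Action of psi : [j] -> [l] on formal combinations of triples (index, element, phi)
with phi : [deg i] -> [j]: the basis element (i,x,phi) goes to (i,x,psi o phi).\<close>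
definition indact :: "('i \<Rightarrow> nat) \<Rightarrow> nat \<Rightarrow> nat \<Rightarrow> ('g::group_add) morph
     \<Rightarrow> ('i \<times> 'x \<times> 'g morph \<Rightarrow> 'k::comm_ring_1) \<Rightarrow> ('i \<times> 'x \<times> 'g morph \<Rightarrow> 'k)" where
  "indact deg j l psi p = (\<lambda>(i, x, chi).
      \<Sum>phi \<in> {phi \<in> hom (deg i) j. comp (deg i) psi phi = chi}. p (i, x, phi))"

text \<open>Canonical free cover P of V: the direct sum of copies of M(n), one for every element v of
V_n (all n); P_j has k-basis the triples (n, v, phi) with v in V_n, phi : [n] -> [j].\<close>
definition Pcar :: "(nat \<Rightarrow> 'v set) \<Rightarrow> nat \<Rightarrow> (nat \<times> 'v \<times> ('g::group_add) morph \<Rightarrow> 'k::comm_ring_1) set" where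
  "Pcar C j = {p. finite {t. p t \<noteq> 0} \<and>
                  (\<forall>n v phi. p (n, v, phi) \<noteq> 0 \<longrightarrow> v \<in> C n \<and> phi \<in> hom n j)}"

definition Pproj :: "('k::comm_ring_1 \<Rightarrow> 'v::ab_group_add \<Rightarrow> 'v) \<Rightarrow> (nat \<Rightarrow> nat \<Rightarrow> ('g::group_add) morph \<Rightarrow> 'v \<Rightarrow> 'v)
     \<Rightarrow> nat \<Rightarrow> (nat \<times> 'v \<times> 'g morph \<Rightarrow> 'k) \<Rightarrow> 'v" where
  "Pproj sc act j p = (\<Sum>t \<in> {t. p t \<noteq> 0}. case t of (n, v, phi) \<Rightarrow> sc (p t) (act n j phi v))"

definition Psqm :: "(nat \<Rightarrow> 'v set) \<Rightarrow> (nat \<times> 'v \<times> ('g::group_add) morph \<Rightarrow> 'k::comm_ring_1, 'g) sqm" where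
  "Psqm C = (Pcar C, (\<lambda>_. {0}), indact (\<lambda>n. n))"

definition Ksqm :: "('k::comm_ring_1 \<Rightarrow> 'v::ab_group_add \<Rightarrow> 'v) \<Rightarrow> (nat \<Rightarrow> 'v set)
     \<Rightarrow> (nat \<Rightarrow> nat \<Rightarrow> ('g::group_add) morph \<Rightarrow> 'v \<Rightarrow> 'v) \<Rightarrow> (nat \<times> 'v \<times> 'g morph \<Rightarrow> 'k, 'g) sqm" where
  "Ksqm sc C act = ((\<lambda>j. {p \<in> Pcar C j. Pproj sc act j p = 0}), (\<lambda>_. {0}), indact (\<lambda>n. n))"

text \<open>H_1^{D^a}(V) = ker(D^a K -> D^a P) for the projective presentation 0 -> K -> P -> V -> 0
(P projective, H_1 of P vanishes, D^a right exact). The map is induced by the inclusion K <= P,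
so it vanishes iff in every degree j, an element of (D^a K)_j that is zero in (D^a P)_j is
already zero in (D^a K)_j.\<close>
definition H1D_vanishes :: "('k::comm_ring_1 \<Rightarrow> 'v::ab_group_add \<Rightarrow> 'v) \<Rightarrow> (nat \<Rightarrow> 'v set)
     \<Rightarrow> (nat \<Rightarrow> nat \<Rightarrow> ('g::group_add) morph \<Rightarrow> 'v \<Rightarrow> 'v) \<Rightarrow> nat \<Rightarrow> bool" where
  "H1D_vanishes sc C act a =
     (let DK = (Dop ^^ a) (Ksqm sc C act); DP = (Dop ^^ a) (Psqm C :: (_ \<Rightarrow> 'k, _) sqm) in
      \<forall>j. \<forall>x \<in> fst DK j. x \<in> fst (snd DP) j \<longrightarrow> x \<in> fst (snd DK) j)"

definition depth :: "('k::comm_ring_1 \<Rightarrow> 'v::ab_group_add \<Rightarrow> 'v) \<Rightarrow> (nat \<Rightarrow> 'v set)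
     \<Rightarrow> (nat \<Rightarrow> nat \<Rightarrow> ('g::group_add) morph \<Rightarrow> 'v \<Rightarrow> 'v) \<Rightarrow> enat" where
  "depth sc C act = Inf (enat ` {a. \<not> H1D_vanishes sc C act (Suc a)})"

text \<open>A k[G_n]-module W (carrier Wc inside the ambient module, G_n = Hom([n],[n]) acting on
the left by Wact).\<close>
definition kGn_module :: "('k::comm_ring_1 \<Rightarrow> 'v::ab_group_add \<Rightarrow> 'v) \<Rightarrow> nat \<Rightarrow> 'v set
     \<Rightarrow> (('g::group_add) morph \<Rightarrow> 'v \<Rightarrow> 'v) \<Rightarrow> bool" where
  "kGn_module sc n Wc Wact =
     (module sc \<and> module.subspace sc Wc
    \<and> (\<forall>s \<in> hom n n. (\<forall>w\<in>Wc. Wact s w \<in> Wc)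
          \<and> (\<forall>w\<in>Wc. \<forall>w'\<in>Wc. Wact s (w + w') = Wact s w + Wact s w')
          \<and> (\<forall>c. \<forall>w\<in>Wc. Wact s (sc c w) = sc c (Wact s w)))
    \<and> (\<forall>w\<in>Wc. Wact (idm n) w = w)
    \<and> (\<forall>s \<in> hom n n. \<forall>t \<in> hom n n. \<forall>w\<in>Wc. Wact (comp n s t) w = Wact s (Wact t w)))"

text \<open>The direct sum over i in I of M(W_i), W_i a k[G_{deg i}]-module:
M(W)_j = W (x)_{k[G_n]} k[Hom([n],[j])], realised as the free k-module on pairs (w, phi)
modulo bilinearity in w and the balancing relations (s w) (x) phi = w (x) (phi o s).\<close>
definition RPcar :: "nat set \<Rightarrow> (nat \<Rightarrow> nat) \<Rightarrow> (nat \<Rightarrow> 'v set) \<Rightarrow> nat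
     \<Rightarrow> (nat \<times> 'v \<times> ('g::group_add) morph \<Rightarrow> 'k::comm_ring_1) set" where
  "RPcar I deg Wc j = {p. finite {t. p t \<noteq> 0} \<and>
       (\<forall>i w phi. p (i, w, phi) \<noteq> 0 \<longrightarrow> i \<in> I \<and> w \<in> Wc i \<and> phi \<in> hom (deg i) j)}"

definition RPrel :: "('k::comm_ring_1 \<Rightarrow> 'v::ab_group_add \<Rightarrow> 'v) \<Rightarrow> nat set \<Rightarrow> (nat \<Rightarrow> nat) \<Rightarrow> (nat \<Rightarrow> 'v set)
     \<Rightarrow> (nat \<Rightarrow> ('g::group_add) morph \<Rightarrow> 'v \<Rightarrow> 'v) \<Rightarrow> nat \<Rightarrow> (nat \<times> 'v \<times> 'g morph \<Rightarrow> 'k) set" where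
  "RPrel sc I deg Wc Wact j = module.span fsc (
       {delta (i, w + w', phi) - delta (i, w, phi) - delta (i, w', phi) | i w w' phi.
            i \<in> I \<and> w \<in> Wc i \<and> w' \<in> Wc i \<and> phi \<in> hom (deg i) j}
     \<union> {delta (i, sc c w, phi) - fsc c (delta (i, w, phi)) | i c w phi.
            i \<in> I \<and> w \<in> Wc i \<and> phi \<in> hom (deg i) j}
     \<union> {delta (i, Wact i s w, phi) - delta (i, w, comp (deg i) phi s) | i s w phi.
            i \<in> I \<and> s \<in> hom (deg i) (deg i) \<and> w \<in> Wc i \<and> phi \<in> hom (deg i) j})"

definition RPsqm :: "('k::comm_ring_1 \<Rightarrow> 'v::ab_group_add \<Rightarrow> 'v) \<Rightarrow> nat set \<Rightarrow> (nat \<Rightarrow> nat) \<Rightarrow> (nat \<Rightarrow> 'v set)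
     \<Rightarrow> (nat \<Rightarrow> ('g::group_add) morph \<Rightarrow> 'v \<Rightarrow> 'v) \<Rightarrow> (nat \<times> 'v \<times> 'g morph \<Rightarrow> 'k, 'g) sqm" where
  "RPsqm sc I deg Wc Wact = (RPcar I deg Wc, RPrel sc I deg Wc Wact, indact deg)"

text \<open>Related in degree <= r: there is an exact sequence 0 -> K -> M -> V -> 0 with M a direct
sum of modules M(W_i) and K generated in degree <= r. The map M -> V is given by k-linear maps
pi j on the representatives, killing the relations, natural, and surjective; K is its kernel
(a subquotient of M).\<close>
definition related_in_degree :: "('k::comm_ring_1 \<Rightarrow> 'v::ab_group_add \<Rightarrow> 'v) \<Rightarrow> (nat \<Rightarrow> 'v set)
     \<Rightarrow> (nat \<Rightarrow> nat \<Rightarrow> ('g::group_add) morph \<Rightarrow> 'v \<Rightarrow> 'v) \<Rightarrow> nat \<Rightarrow> bool" where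
  "related_in_degree sc C act r =
     (\<exists>I deg Wc Wact (pi :: nat \<Rightarrow> (nat \<times> 'v \<times> 'g morph \<Rightarrow> 'k) \<Rightarrow> 'v).
        (\<forall>i\<in>I. kGn_module sc (deg i) (Wc i) (Wact i))
      \<and> (\<forall>j. \<forall>p \<in> RPcar I deg Wc j. pi j p \<in> C j)
      \<and> (\<forall>j. \<forall>p \<in> RPcar I deg Wc j. \<forall>q \<in> RPcar I deg Wc j. pi j (p + q) = pi j p + pi j q)
      \<and> (\<forall>j c. \<forall>p \<in> RPcar I deg Wc j. pi j (fsc c p) = sc c (pi j p))
      \<and> (\<forall>j. \<forall>p \<in> RPrel sc I deg Wc Wact j. pi j p = 0)
      \<and> (\<forall>n m phi. phi \<in> hom n m \<longrightarrow>
           (\<forall>p \<in> RPcar I deg Wc n. pi m (indact deg n m phi p) = act n m phi (pi n p)))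
      \<and> (\<forall>j. pi j ` RPcar I deg Wc j = C j)
      \<and> gen_sqm fsc ((\<lambda>j. {p \<in> RPcar I deg Wc j. pi j p = 0}), RPrel sc I deg Wc Wact, indact deg) r)"

definition presented_in_finite_degree :: "('k::comm_ring_1 \<Rightarrow> 'v::ab_group_add \<Rightarrow> 'v) \<Rightarrow> (nat \<Rightarrow> 'v set)
     \<Rightarrow> (nat \<Rightarrow> nat \<Rightarrow> ('g::group_add) morph \<Rightarrow> 'v \<Rightarrow> 'v) \<Rightarrow> bool" where
  "presented_in_finite_degree sc C act =
     ((\<exists>m. generated_in_degree sc C act m) \<and> (\<exists>r. related_in_degree sc C act r))"

end

theory Submission
  imports Defs
begin


lemma hom_iff: "phi \<in> hom n m \<longleftrightarrow> inj_on (fst phi) {..<n} \<and> fst phi ` {..<n} \<subseteq> {..<m}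
    \<and> (\<forall>x\<ge>n. fst phi x = 0) \<and> (\<forall>x\<ge>n. snd phi x = 0)"
  by (cases phi) (simp add: hom_def)

lemma hom_lt: "phi \<in> hom n m \<Longrightarrow> x < n \<Longrightarrow> fst phi x < m"
  unfolding hom_iff by auto

lemma hom_comp: "phi \<in> hom n m \<Longrightarrow> psi \<in> hom m l \<Longrightarrow> comp n psi phi \<in> hom n l"
  unfolding hom_iff comp_def
  by (auto simp: inj_on_def image_subset_iff)

lemma comp_assoc: "phi \<in> hom n m \<Longrightarrow>
   comp n chi (comp n psi phi) = comp n (comp m chi psi) phi"
  by (auto simp: comp_def fun_eq_iff hom_lt add.assoc)

lemma comp_idm_left: "phi \<in> hom n j \<Longrightarrow> comp n (idm j) phi = phi"
  unfolding hom_iff comp_def idm_def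
  by (cases phi) (auto simp: fun_eq_iff image_subset_iff not_less)

lemma comp_idm_right: "phi \<in> hom n j \<Longrightarrow> comp n phi (idm n) = phi"
  unfolding hom_iff comp_def idm_def
  by (cases phi) (auto simp: fun_eq_iff image_subset_iff not_less)

lemma idm_hom: "idm n \<in> hom n n"
  unfolding hom_iff idm_def by (auto simp: inj_on_def)

lemma comp_cancel:
  assumes "psi \<in> hom j l" "phi1 \<in> hom n j" "phi2 \<in> hom n j"
    "comp n psi phi1 = comp n psi phi2"
  shows "phi1 = phi2"
proof -
  have f: "fst phi1 x = fst phi2 x" for x
  proof (cases "x < n")
    case True
    have "fst psi (fst phi1 x) = fst psi (fst phi2 x)"
      using assms(4) True by (simp add: comp_def fun_eq_iff) meson
    moreover have "fst phi1 x < j" "fst phi2 x < j" using hom_lt[OF assms(2) True] hom_lt[OF assms(3) True] by auto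
    ultimately show ?thesis using assms(1) unfolding hom_iff inj_on_def by auto
  next
    case False thus ?thesis using assms unfolding hom_iff by auto
  qed
  have g: "snd phi1 x = snd phi2 x" for x
  proof (cases "x < n")
    case True
    have "snd phi1 x + snd psi (fst phi1 x) = snd phi2 x + snd psi (fst phi2 x)"
      using assms(4) True by (simp add: comp_def fun_eq_iff) meson
    thus ?thesis using f by simp
  next
    case False thus ?thesis using assms unfolding hom_iff by auto
  qed
  show ?thesis using f g by (simp add: prod_eq_iff fun_eq_iff)
qed

lemma sigma_hom: "phi \<in> hom n m \<Longrightarrow> sigma n m phi \<in> hom (Suc n) (Suc m)"
  unfolding hom_iff sigma_def
  by (auto simp: inj_on_def image_subset_iff less_Suc_eq)

fun Sig :: "nat \<Rightarrow> nat \<Rightarrow> nat \<Rightarrow> ('g::group_add) morph \<Rightarrow> 'g morph" where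
  "Sig 0 n m phi = phi"
| "Sig (Suc a) n m phi = Sig a (Suc n) (Suc m) (sigma n m phi)"

lemma Sig_hom: "phi \<in> hom n m \<Longrightarrow> Sig a n m phi \<in> hom (n + a) (m + a)"
proof (induction a arbitrary: n m phi)
  case 0 then show ?case by simp
next
  case (Suc a)
  have "Sig a (Suc n) (Suc m) (sigma n m phi) \<in> hom (Suc n + a) (Suc m + a)"
    using Suc.IH sigma_hom[OF Suc.prems] by blast
  then show ?case by simp
qed

definition sk :: "nat \<Rightarrow> nat \<Rightarrow> ('g::group_add) morph" where
  "sk k n = (\<lambda>x. if x < n then (if x < k then x else Suc x) else 0, \<lambda>x. 0)"

lemma sk_hom: "sk k n \<in> hom n (Suc n)"
  unfolding hom_iff sk_def by (auto simp: inj_on_def)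

lemma incl_sk: "incl n = sk n n"
  by (auto simp: incl_def idm_def sk_def fun_eq_iff)

lemma sigma_sk: assumes "k \<le> n" shows "sigma n (Suc n) (sk k n) = sk k (Suc n)"
  using assms by (auto simp: sigma_def sk_def fun_eq_iff)

lemma Sig_sk: "k \<le> n \<Longrightarrow> Sig a n (Suc n) (sk k n) = (sk k (n + a) :: ('g::group_add) morph)"
  by (induction a arbitrary: n) (auto simp: sigma_sk)

lemma Dop_alt: "Dop X = (\<lambda>n. fst X (Suc n),
   \<lambda>n. setplus (fst (snd X) (Suc n)) (snd (snd X) n (Suc n) (incl n) ` fst X n),
   \<lambda>n m phi. snd (snd X) (Suc n) (Suc m) (sigma n m phi))"
  by (cases X) (simp add: Dop_def)

lemma Dop_pow_fst: "fst ((Dop ^^ a) X) n = fst X (n + a)"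
  by (induction a arbitrary: n) (auto simp: Dop_alt)

lemma Dop_pow_act: "snd (snd ((Dop ^^ a) X)) n m phi = snd (snd X) (n + a) (m + a) (Sig a n m phi)"
  by (induction a arbitrary: n m phi) (auto simp: Dop_alt)

lemma Dop_pow_N_Suc: "fst (snd ((Dop ^^ Suc a) X)) n = setplus (fst (snd ((Dop ^^ a) X)) (Suc n))
     (snd (snd X) (n + a) (Suc n + a) (Sig a n (Suc n) (incl n)) ` fst X (n + a))"
  by (simp add: Dop_alt Dop_pow_fst Dop_pow_act)




lemma module_fsc: "module (fsc :: 'k::comm_ring_1 \<Rightarrow> ('a \<Rightarrow> 'k) \<Rightarrow> _)"
  by unfold_locales (auto simp: fsc_def fun_eq_iff algebra_simps)

lemma sum_fun_apply: "(\<Sum>i\<in>A. f i) x = (\<Sum>i\<in>A. f i x)"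
  by (induction A rule: infinite_finite_induct) auto

lemma fsc_apply[simp]: "fsc c p x = c * p x" by (simp add: fsc_def)

lemma delta_apply: "delta a x = (if x = a then 1 else 0)" by (simp add: delta_def)

lemma supp_delta: "{t. (delta a :: _ \<Rightarrow> 'k::comm_ring_1) t \<noteq> 0} = {a}"
  by (auto simp: delta_def)

lemma decomp:
  fixes p :: "'a \<Rightarrow> 'k::comm_ring_1"
  assumes "finite S" "{t. p t \<noteq> 0} \<subseteq> S"
  shows "p = (\<Sum>t\<in>S. fsc (p t) (delta t))"
proof
  fix x
  have "(\<Sum>t\<in>S. fsc (p t) (delta t)) x = (\<Sum>t\<in>S. if x = t then p t else 0)"
    unfolding sum_fun_apply by (rule sum.cong) (auto simp: delta_def)
  also have "\<dots> = p x" using assms by auto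
  finally show "p x = (\<Sum>t\<in>S. fsc (p t) (delta t)) x" by simp
qed

lemma finite_supp_add: "finite {t. p t \<noteq> 0} \<Longrightarrow> finite {t. q t \<noteq> 0} \<Longrightarrow>
   finite {t. (p + q) t \<noteq> (0::'k::comm_ring_1)}"
  by (rule finite_subset[of _ "{t. p t \<noteq> 0} \<union> {t. q t \<noteq> 0}"]) auto

lemma finite_supp_fsc: "finite {t. p t \<noteq> 0} \<Longrightarrow> finite {t. fsc c p t \<noteq> (0::'k::comm_ring_1)}"
  by (rule finite_subset[of _ "{t. p t \<noteq> 0}"]) auto

lemma finite_supp_delta: "finite {t. (delta a :: _ \<Rightarrow> 'k::comm_ring_1) t \<noteq> 0}"
  by (simp add: supp_delta)

lemma finite_supp_sum: "(\<And>i. i \<in> A \<Longrightarrow> finite {t. f i t \<noteq> 0}) \<Longrightarrow>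
   finite {t. (\<Sum>i\<in>A. f i) t \<noteq> (0::'k::comm_ring_1)}"
proof (induction A rule: infinite_finite_induct)
  case (insert x F)
  then show ?case using finite_supp_add[of "f x" "sum f F"] by simp
qed auto

lemma finite_supp_diff: "finite {t. p t \<noteq> 0} \<Longrightarrow> finite {t. q t \<noteq> 0} \<Longrightarrow>
   finite {t. (p - q) t \<noteq> (0::'k::comm_ring_1)}"
  by (rule finite_subset[of _ "{t. p t \<noteq> 0} \<union> {t. q t \<noteq> 0}"]) auto

definition lext :: "('k::comm_ring_1 \<Rightarrow> 'u::ab_group_add \<Rightarrow> 'u) \<Rightarrow> ('b \<Rightarrow> 'u) \<Rightarrow> ('b \<Rightarrow> 'k) \<Rightarrow> 'u" where
  "lext s R p = (\<Sum>t\<in>{t. p t \<noteq> 0}. s (p t) (R t))"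

context
  fixes s :: "'k::comm_ring_1 \<Rightarrow> 'u::ab_group_add \<Rightarrow> 'u"
  assumes ms: "module s"
begin

lemma lext_superset: "finite S \<Longrightarrow> {t. p t \<noteq> 0} \<subseteq> S \<Longrightarrow> lext s R p = (\<Sum>t\<in>S. s (p t) (R t))"
  unfolding lext_def by (rule sum.mono_neutral_left) (auto simp: module.scale_zero_left[OF ms])

lemma lext_add: assumes "finite {t. p t \<noteq> 0}" "finite {t. q t \<noteq> 0}"
  shows "lext s R (p + q) = lext s R p + lext s R q"
proof -
  let ?S = "{t. p t \<noteq> 0} \<union> {t. q t \<noteq> 0}"
  have "lext s R (p + q) = (\<Sum>t\<in>?S. s ((p + q) t) (R t))"
    by (rule lext_superset) (use assms in auto)
  also have "\<dots> = (\<Sum>t\<in>?S. s (p t) (R t)) + (\<Sum>t\<in>?S. s (q t) (R t))"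
    by (simp add: module.scale_left_distrib[OF ms] sum.distrib)
  also have "\<dots> = lext s R p + lext s R q"
    using lext_superset[of ?S p R] lext_superset[of ?S q R] assms by auto
  finally show ?thesis .
qed

lemma lext_fsc: assumes "finite {t. p t \<noteq> 0}"
  shows "lext s R (fsc c p) = s c (lext s R p)"
proof -
  have "lext s R (fsc c p) = (\<Sum>t\<in>{t. p t \<noteq> 0}. s (fsc c p t) (R t))"
    by (rule lext_superset) (use assms in auto)
  also have "\<dots> = s c (lext s R p)"
    by (simp add: lext_def module.scale_sum_right[OF ms] module.scale_scale[OF ms, symmetric] del: module.scale_scale[OF ms])
  finally show ?thesis .
qed

lemma lext_delta: "lext s R (delta a) = R a"
  by (simp add: lext_def supp_delta delta_def module.scale_one[OF ms])

lemma lext_zero: "lext s R 0 = 0"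
  by (simp add: lext_def)

lemma lext_sum: "(\<And>i. i \<in> A \<Longrightarrow> finite {t. f i t \<noteq> 0}) \<Longrightarrow>
   lext s R (\<Sum>i\<in>A. f i) = (\<Sum>i\<in>A. lext s R (f i))"
proof (induction A rule: infinite_finite_induct)
  case (insert x F)
  have "lext s R (sum f (insert x F)) = lext s R (f x + sum f F)"
    by (simp only: sum.insert[OF insert.hyps])
  also have "\<dots> = lext s R (f x) + lext s R (sum f F)"
    by (rule lext_add) (use insert.prems finite_supp_sum[of F f] in auto)
  also have "\<dots> = (\<Sum>i\<in>insert x F. lext s R (f i))"
  proof -
    have IH: "lext s R (sum f F) = (\<Sum>i\<in>F. lext s R (f i))" using insert.IH insert.prems by blast
    show ?thesis by (simp only: sum.insert[OF insert.hyps] IH)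
  qed
  finally show ?case .
next
  case (infinite A)
  then show ?case by (simp only: sum.infinite[OF infinite(1)] lext_zero)
qed (simp_all only: sum.empty lext_zero)

lemma lext_diff: assumes "finite {t. p t \<noteq> 0}" "finite {t. q t \<noteq> 0}"
  shows "lext s R (p - q) = lext s R p - lext s R q"
proof -
  have "lext s R (p - q + q) = lext s R (p - q) + lext s R q"
    by (rule lext_add[OF finite_supp_diff[OF assms] assms(2)])
  then show ?thesis by (simp only: diff_add_cancel) (metis add_diff_cancel)
qed

lemma lext_decomp: assumes "finite S" "{t. p t \<noteq> 0} \<subseteq> S"
  shows "lext s R p = (\<Sum>t\<in>S. s (p t) (lext s R (delta t)))"
  using lext_superset[OF assms] by (simp add: lext_delta)

end

lemma RPcar_iff: "p \<in> RPcar I (\<lambda>n. n) W j \<longleftrightarrow> finite {t. p t \<noteq> 0} \<and>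
  (\<forall>i w phi. p (i, w, phi) \<noteq> 0 \<longrightarrow> i \<in> I \<and> w \<in> W i \<and> phi \<in> hom i j)"
  by (simp add: RPcar_def)

lemma Pcar_RPcar: "Pcar C j = RPcar UNIV (\<lambda>n. n) C j"
  by (simp add: Pcar_def RPcar_def)

lemma RPcar_add: "p \<in> RPcar I (\<lambda>n. n) W j \<Longrightarrow> q \<in> RPcar I (\<lambda>n. n) W j \<Longrightarrow> p + q \<in> RPcar I (\<lambda>n. n) W j"
  unfolding RPcar_iff using finite_supp_add[of p q] by (auto, metis add.right_neutral)+

lemma RPcar_fsc: "p \<in> RPcar I (\<lambda>n. n) W j \<Longrightarrow> fsc c p \<in> RPcar I (\<lambda>n. n) W j"
  unfolding RPcar_iff using finite_supp_fsc[of p]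
  apply auto apply (metis mult_zero_right)+ done

lemma RPcar_zero: "0 \<in> RPcar I (\<lambda>n. n) W j"
  unfolding RPcar_iff by auto

lemma RPcar_sum: "(\<And>i. i \<in> A \<Longrightarrow> f i \<in> RPcar I (\<lambda>n. n) W j) \<Longrightarrow> (\<Sum>i\<in>A. f i) \<in> RPcar I (\<lambda>n. n) W j"
  by (induction A rule: infinite_finite_induct) (auto intro: RPcar_add RPcar_zero)

lemma RPcar_delta: "i \<in> I \<Longrightarrow> w \<in> W i \<Longrightarrow> phi \<in> hom i j \<Longrightarrow> delta (i, w, phi) \<in> RPcar I (\<lambda>n. n) W j"
  unfolding RPcar_iff by (auto simp: delta_def)

lemma RPcar_diff: "p \<in> RPcar I (\<lambda>n. n) W j \<Longrightarrow> q \<in> RPcar I (\<lambda>n. n) W j \<Longrightarrow> p - q \<in> RPcar I (\<lambda>n. n) W j"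
proof -
  have *: "p t - q t \<noteq> 0 \<Longrightarrow> p t \<noteq> 0 \<or> q t \<noteq> 0" for t by auto
  show "p \<in> RPcar I (\<lambda>n. n) W j \<Longrightarrow> q \<in> RPcar I (\<lambda>n. n) W j \<Longrightarrow> p - q \<in> RPcar I (\<lambda>n. n) W j"
    unfolding RPcar_iff using finite_supp_diff[of p q] * by (simp, blast)
qed

lemma RPcar_decomp: "p \<in> RPcar I (\<lambda>n. n) W j \<Longrightarrow> p = (\<Sum>t\<in>{t. p t \<noteq> 0}. fsc (p t) (delta t))"
  by (rule decomp) (auto simp: RPcar_iff)

lemma RPcar_supp: "p \<in> RPcar I (\<lambda>n. n) W j \<Longrightarrow> t \<in> {t. p t \<noteq> 0} \<Longrightarrow>
   fst t \<in> I \<and> fst (snd t) \<in> W (fst t) \<and> snd (snd t) \<in> hom (fst t) j"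
  by (cases t) (auto simp: RPcar_iff)

lemma indact_add: "indact d j l psi (p + q) = indact d j l psi p + indact d j l psi q"
  by (auto simp: indact_def fun_eq_iff sum.distrib)

lemma indact_fsc: "indact d j l psi (fsc c p) = fsc c (indact d j l psi p)"
  by (auto simp: indact_def fun_eq_iff sum_distrib_left)

lemma indact_zero: "indact d j l psi 0 = 0"
  by (auto simp: indact_def fun_eq_iff)

lemma indact_sum: "indact d j l psi (\<Sum>i\<in>A. f i) = (\<Sum>i\<in>A. indact d j l psi (f i))"
proof (induction A rule: infinite_finite_induct)
  case (insert x F)
  then show ?case by (simp only: sum.insert[OF insert.hyps] indact_add)
next
  case (infinite A)
  then show ?case by (simp only: sum.infinite[OF infinite] indact_zero)
qed (simp_all only: sum.empty indact_zero)

lemma indact_diff: "indact d j l psi (p - q) = indact d j l psi p - indact d j l psi q"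
  using indact_add[of d j l psi "p - q" q] by simp

lemma indact_delta:
  fixes x :: 'x and psi :: "('g::group_add) morph"
  assumes "psi \<in> hom j l" "phi \<in> hom i j"
  shows "indact (\<lambda>n. n) j l psi (delta (i, x, phi)) = delta (i, x, comp i psi phi)"
proof
  fix t :: "nat \<times> 'x \<times> 'g morph"
  obtain i' x' chi where t: "t = (i', x', chi)" by (cases t)
  show "indact (\<lambda>n. n) j l psi (delta (i, x, phi)) t = delta (i, x, comp i psi phi) t"
  proof (cases "i' = i \<and> x' = x \<and> chi = comp i psi phi")
    case True
    then have "{phi' \<in> hom i' j. comp i' psi phi' = chi} = {phi}"
      using assms comp_cancel by blast
    then show ?thesis using True by (simp add: t indact_def delta_def)
  next
    case False
    then show ?thesis
      by (auto simp: t indact_def delta_def intro!: sum.neutral)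
  qed
qed




lemma indact_l: "indact d j l = indact d j l'"
  by (simp add: indact_def fun_eq_iff)

lemma indact_decomp:
  assumes p: "p \<in> RPcar I (\<lambda>n. n) W j" and psi: "psi \<in> hom j l"
  shows "indact (\<lambda>n. n) j l psi p =
    (\<Sum>t\<in>{t. p t \<noteq> 0}. fsc (p t) (delta (fst t, fst (snd t), comp (fst t) psi (snd (snd t)))))"
proof -
  have e: "p = (\<Sum>t\<in>{t. p t \<noteq> 0}. fsc (p t) (delta t))" by (rule RPcar_decomp[OF p])
  have "indact (\<lambda>n. n) j l psi p = indact (\<lambda>n. n) j l psi (\<Sum>t\<in>{t. p t \<noteq> 0}. fsc (p t) (delta t))"
    by (rule arg_cong[where f="indact (\<lambda>n. n) j l psi"], rule e)
  also have "\<dots> = (\<Sum>t\<in>{t. p t \<noteq> 0}. fsc (p t) (indact (\<lambda>n. n) j l psi (delta t)))"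
    by (simp only: indact_sum indact_fsc)
  also have "\<dots> = (\<Sum>t\<in>{t. p t \<noteq> 0}. fsc (p t) (delta (fst t, fst (snd t), comp (fst t) psi (snd (snd t)))))"
  proof (rule sum.cong[OF refl])
    fix t assume t: "t \<in> {t. p t \<noteq> 0}"
    obtain i w phi where tt: "t = (i, w, phi)" by (cases t)
    have h: "phi \<in> hom i j" using RPcar_supp[OF p t] tt by simp
    show "fsc (p t) (indact (\<lambda>n. n) j l psi (delta t)) =
      fsc (p t) (delta (fst t, fst (snd t), comp (fst t) psi (snd (snd t))))"
      unfolding tt by (subst indact_delta[OF psi h]) simp
  qed
  finally show ?thesis .
qed

lemma indact_RPcar:
  assumes p: "p \<in> RPcar I (\<lambda>n. n) W j" and psi: "psi \<in> hom j l"
  shows "indact (\<lambda>n. n) j l psi p \<in> RPcar I (\<lambda>n. n) W l"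
  unfolding indact_decomp[OF p psi]
proof (rule RPcar_sum, rule RPcar_fsc)
  fix t assume t: "t \<in> {t. p t \<noteq> 0}"
  show "delta (fst t, fst (snd t), comp (fst t) psi (snd (snd t))) \<in> RPcar I (\<lambda>n. n) W l"
    using RPcar_supp[OF p t] by (intro RPcar_delta) (auto intro: hom_comp psi)
qed

lemma indact_comp:
  assumes p: "p \<in> RPcar I (\<lambda>n. n) W j" and phi: "phi \<in> hom j l" and psi: "psi \<in> hom l L"
  shows "indact (\<lambda>n. n) l L psi (indact (\<lambda>n. n) j l phi p) = indact (\<lambda>n. n) j L (comp j psi phi) p"
proof -
  have "indact (\<lambda>n. n) l L psi (indact (\<lambda>n. n) j l phi p) =
     (\<Sum>t\<in>{t. p t \<noteq> 0}. fsc (p t) (indact (\<lambda>n. n) l L psi (delta (fst t, fst (snd t), comp (fst t) phi (snd (snd t))))))"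
    unfolding indact_decomp[OF p phi] by (simp only: indact_sum indact_fsc)
  also have "\<dots> = (\<Sum>t\<in>{t. p t \<noteq> 0}. fsc (p t) (delta (fst t, fst (snd t), comp (fst t) (comp j psi phi) (snd (snd t)))))"
  proof (rule sum.cong[OF refl])
    fix t assume t: "t \<in> {t. p t \<noteq> 0}"
    have h: "snd (snd t) \<in> hom (fst t) j" using RPcar_supp[OF p t] by simp
    show "fsc (p t) (indact (\<lambda>n. n) l L psi (delta (fst t, fst (snd t), comp (fst t) phi (snd (snd t))))) =
        fsc (p t) (delta (fst t, fst (snd t), comp (fst t) (comp j psi phi) (snd (snd t))))"
      by (subst indact_delta[OF psi hom_comp[OF h phi]]) (simp add: comp_assoc[OF h])
  qed
  also have "\<dots> = indact (\<lambda>n. n) j L (comp j psi phi) p"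
    unfolding indact_decomp[OF p hom_comp[OF phi psi]] ..
  finally show ?thesis .
qed

lemma indact_idm:
  assumes p: "p \<in> RPcar I (\<lambda>n. n) W j"
  shows "indact (\<lambda>n. n) j j (idm j) p = p"
proof -
  have "indact (\<lambda>n. n) j j (idm j) p = (\<Sum>t\<in>{t. p t \<noteq> 0}. fsc (p t) (delta t))"
    unfolding indact_decomp[OF p idm_hom]
  proof (rule sum.cong[OF refl])
    fix t assume t: "t \<in> {t. p t \<noteq> 0}"
    have h: "snd (snd t) \<in> hom (fst t) j" using RPcar_supp[OF p t] by simp
    show "fsc (p t) (delta (fst t, fst (snd t), comp (fst t) (idm j) (snd (snd t)))) = fsc (p t) (delta t)"
      using comp_idm_left[OF h] by simp
  qed
  also have "\<dots> = p" using RPcar_decomp[OF p] by simp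
  finally show ?thesis .
qed

context
  fixes sc :: "'k::comm_ring_1 \<Rightarrow> 'v::ab_group_add \<Rightarrow> 'v"
    and C :: "nat \<Rightarrow> 'v set"
    and act :: "nat \<Rightarrow> nat \<Rightarrow> ('g::group_add) morph \<Rightarrow> 'v \<Rightarrow> 'v"
  assumes V: "fig_module sc C act"
begin

lemma V_all: "module sc \<and> (\<forall>n. module.subspace sc (C n)) \<and>
   (\<forall>n m phi. phi \<in> hom n m \<longrightarrow> (\<forall>x\<in>C n. act n m phi x \<in> C m)
       \<and> (\<forall>x\<in>C n. \<forall>y\<in>C n. act n m phi (x + y) = act n m phi x + act n m phi y)
       \<and> (\<forall>c. \<forall>x\<in>C n. act n m phi (sc c x) = sc c (act n m phi x)))
   \<and> (\<forall>n. \<forall>x\<in>C n. act n n (idm n) x - x \<in> {0})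
   \<and> (\<forall>n m l phi psi. phi \<in> hom n m \<longrightarrow> psi \<in> hom m l \<longrightarrow>
         (\<forall>x\<in>C n. act n l (comp n psi phi) x - act m l psi (act n m phi x) \<in> {0}))"
  using V unfolding fig_module_def is_sqm_def prod.case by blast

lemma V_module: "module sc"
  using V_all by blast

lemma V_sub: "module.subspace sc (C n)"
  using V_all by blast

lemma V_closed: "phi \<in> hom n m \<Longrightarrow> x \<in> C n \<Longrightarrow> act n m phi x \<in> C m"
  using V_all by blast

lemma V_add: "phi \<in> hom n m \<Longrightarrow> x \<in> C n \<Longrightarrow> y \<in> C n \<Longrightarrow> act n m phi (x + y) = act n m phi x + act n m phi y"
  using V_all by blast

lemma V_scale: "phi \<in> hom n m \<Longrightarrow> x \<in> C n \<Longrightarrow> act n m phi (sc c x) = sc c (act n m phi x)"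
  using V_all by blast

lemma V_idm: "x \<in> C n \<Longrightarrow> act n n (idm n) x = x"
  using V_all by (metis singletonD eq_iff_diff_eq_0)

lemma V_comp: "phi \<in> hom n m \<Longrightarrow> psi \<in> hom m l \<Longrightarrow> x \<in> C n \<Longrightarrow>
   act n l (comp n psi phi) x = act m l psi (act n m phi x)"
proof -
  assume a: "phi \<in> hom n m" "psi \<in> hom m l" "x \<in> C n"
  then have "act n l (comp n psi phi) x - act m l psi (act n m phi x) \<in> {0}" using V_all by blast
  then show ?thesis by simp
qed

lemma V_sum: "phi \<in> hom n m \<Longrightarrow> (\<And>i. i \<in> A \<Longrightarrow> f i \<in> C n) \<Longrightarrow>
   act n m phi (\<Sum>i\<in>A. f i) = (\<Sum>i\<in>A. act n m phi (f i))"
proof (induction A rule: infinite_finite_induct)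
  case (infinite A)
  have "act n m phi 0 = act n m phi (0 + 0)" by simp
  also have "\<dots> = act n m phi 0 + act n m phi 0"
    using V_add[OF infinite(2)] module.subspace_0[OF V_module V_sub] by blast
  finally show ?case using infinite by simp
next
  case empty
  have "act n m phi 0 = act n m phi (0 + 0)" by simp
  also have "\<dots> = act n m phi 0 + act n m phi 0"
    using V_add[OF empty(1)] module.subspace_0[OF V_module V_sub] by blast
  finally show ?case by simp
next
  case (insert x F)
  have "sum f F \<in> C n" using insert.prems by (intro module.subspace_sum[OF V_module V_sub]) auto
  then show ?case using insert V_add[OF insert.prems(1)] by simp
qed

lemma Pproj_lext: "Pproj sc act j p = lext sc (\<lambda>(n, v, phi). act n j phi v) p"
  unfolding Pproj_def lext_def by (rule sum.cong) (auto split: prod.split)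

lemma Pproj_delta: "Pproj sc act j (delta (n, v, phi)) = act n j phi v"
  by (simp add: Pproj_lext lext_delta[OF V_module])

lemma Pproj_in: assumes p: "p \<in> RPcar I (\<lambda>n. n) C j" shows "Pproj sc act j p \<in> C j"
  unfolding Pproj_def
proof (rule module.subspace_sum[OF V_module V_sub])
  fix t assume t: "t \<in> {t. p t \<noteq> 0}"
  obtain n v phi where tt: "t = (n, v, phi)" by (cases t)
  have "act n j phi v \<in> C j" using RPcar_supp[OF p t] tt V_closed by auto
  then show "(case t of (n, v, phi) \<Rightarrow> sc (p t) (act n j phi v)) \<in> C j"
    using tt module.subspace_scale[OF V_module V_sub] by auto
qed

lemma Pproj_natural:
  assumes p: "p \<in> RPcar I (\<lambda>n. n) C n" and phi: "phi \<in> hom n l"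
  shows "Pproj sc act l (indact (\<lambda>n. n) n l phi p) = act n l phi (Pproj sc act n p)"
proof -
  let ?S = "{t. p t \<noteq> 0}"
  have fin: "finite ?S" using p by (simp add: RPcar_iff)
  have "Pproj sc act l (indact (\<lambda>n. n) n l phi p) =
     (\<Sum>t\<in>?S. Pproj sc act l (fsc (p t) (delta (fst t, fst (snd t), comp (fst t) phi (snd (snd t))))))"
    unfolding indact_decomp[OF p phi] Pproj_lext
    by (rule lext_sum[OF V_module]) (intro finite_supp_fsc finite_supp_delta)
  also have "\<dots> = (\<Sum>t\<in>?S. sc (p t) (act (fst t) l (comp (fst t) phi (snd (snd t))) (fst (snd t))))"
    by (rule sum.cong[OF refl]) (simp add: Pproj_lext lext_fsc[OF V_module finite_supp_delta] lext_delta[OF V_module])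
  also have "\<dots> = (\<Sum>t\<in>?S. act n l phi (sc (p t) (act (fst t) n (snd (snd t)) (fst (snd t)))))"
  proof (rule sum.cong[OF refl])
    fix t assume t: "t \<in> ?S"
    have h: "snd (snd t) \<in> hom (fst t) n" "fst (snd t) \<in> C (fst t)" using RPcar_supp[OF p t] by auto
    show "sc (p t) (act (fst t) l (comp (fst t) phi (snd (snd t))) (fst (snd t))) =
        act n l phi (sc (p t) (act (fst t) n (snd (snd t)) (fst (snd t))))"
      using V_comp[OF h(1) phi h(2)] V_scale[OF phi V_closed[OF h]] by simp
  qed
  also have "\<dots> = act n l phi (\<Sum>t\<in>?S. sc (p t) (act (fst t) n (snd (snd t)) (fst (snd t))))"
  proof (rule V_sum[OF phi, symmetric])
    fix t assume t: "t \<in> ?S"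
    have h: "snd (snd t) \<in> hom (fst t) n" "fst (snd t) \<in> C (fst t)" using RPcar_supp[OF p t] by auto
    show "sc (p t) (act (fst t) n (snd (snd t)) (fst (snd t))) \<in> C n"
      using V_closed[OF h] module.subspace_scale[OF V_module V_sub] by blast
  qed
  also have "(\<Sum>t\<in>?S. sc (p t) (act (fst t) n (snd (snd t)) (fst (snd t)))) = Pproj sc act n p"
    unfolding Pproj_def by (rule sum.cong) (auto split: prod.split)
  finally show ?thesis .
qed

end




lemma K_N:
  "fst (snd ((Dop ^^ Suc a) (Kc, (\<lambda>_. {0}), indact (\<lambda>n. n)))) j \<subseteq>
     module.span fsc {indact (\<lambda>n. n) (j + a) (Suc (j + a)) psi q | psi q.
        psi \<in> hom (j + a) (Suc (j + a)) \<and> q \<in> Kc (j + a)}"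
proof (induction a arbitrary: j)
  case 0
  show ?case
  proof
    fix x assume "x \<in> fst (snd ((Dop ^^ Suc 0) (Kc, (\<lambda>_. {0}), indact (\<lambda>n. n)))) j"
    then obtain q where q: "q \<in> Kc j" and x: "x = indact (\<lambda>n. n) j (Suc j) (incl j) q"
      unfolding Dop_pow_N_Suc by (auto simp: setplus_def)
    have "incl j \<in> hom j (Suc j)" unfolding incl_sk by (rule sk_hom)
    then show "x \<in> module.span fsc {indact (\<lambda>n. n) (j + 0) (Suc (j + 0)) psi q | psi q.
        psi \<in> hom (j + 0) (Suc (j + 0)) \<and> q \<in> Kc (j + 0)}"
      using q x by (intro module.span_base[OF module_fsc]) (simp only: add_0_right, blast)
  qed
next
  case (Suc a)
  show ?case
  proof
    fix x assume "x \<in> fst (snd ((Dop ^^ Suc (Suc a)) (Kc, (\<lambda>_. {0}), indact (\<lambda>n. n)))) j"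
    then obtain y q where y: "y \<in> fst (snd ((Dop ^^ Suc a) (Kc, (\<lambda>_. {0}), indact (\<lambda>n. n)))) (Suc j)"
      and q: "q \<in> Kc (j + Suc a)"
      and x: "x = y + indact (\<lambda>n. n) (j + Suc a) (Suc j + Suc a) (Sig (Suc a) j (Suc j) (incl j)) q"
      unfolding Dop_pow_N_Suc[of "Suc a"] by (auto simp: setplus_def)
    have y': "y \<in> module.span fsc {indact (\<lambda>n. n) (j + Suc a) (Suc (j + Suc a)) psi q | psi q.
        psi \<in> hom (j + Suc a) (Suc (j + Suc a)) \<and> q \<in> Kc (j + Suc a)}"
    proof -
      have e: "Suc j + a = j + Suc a" by simp
      show ?thesis using Suc.IH[of "Suc j", unfolded e] y by blast
    qed
    have "Sig (Suc a) j (Suc j) (incl j) \<in> hom (j + Suc a) (Suc j + Suc a)"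
      by (rule Sig_hom) (simp add: incl_sk sk_hom)
    then have "indact (\<lambda>n. n) (j + Suc a) (Suc j + Suc a) (Sig (Suc a) j (Suc j) (incl j)) q
      \<in> module.span fsc {indact (\<lambda>n. n) (j + Suc a) (Suc (j + Suc a)) psi q | psi q.
        psi \<in> hom (j + Suc a) (Suc (j + Suc a)) \<and> q \<in> Kc (j + Suc a)}"
      using q unfolding add_Suc[of j "Suc a"] by (intro module.span_base[OF module_fsc]) blast
    then show "x \<in> module.span fsc {indact (\<lambda>n. n) (j + Suc a) (Suc (j + Suc a)) psi q | psi q.
        psi \<in> hom (j + Suc a) (Suc (j + Suc a)) \<and> q \<in> Kc (j + Suc a)}"
      using x y' module.span_add[OF module_fsc] by auto
  qed
qed

lemma sk_never: "y < J \<Longrightarrow> fst (sk j J :: ('g::group_add) morph) y \<noteq> j"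
  by (auto simp: sk_def)

lemma unsk:
  fixes chi :: "('g::group_add) morph"
  assumes chi: "chi \<in> hom n (Suc J)" and nj: "j \<notin> fst chi ` {..<n}" and jJ: "j \<le> J"
  shows "\<exists>psi. psi \<in> hom n J \<and> comp n (sk j J) psi = chi"
proof -
  define u where "u = (\<lambda>c::nat. if c < j then c else c - 1)"
  define psi :: "'g morph" where "psi = (\<lambda>x. if x < n then u (fst chi x) else 0, snd chi)"
  have lt: "x < n \<Longrightarrow> fst chi x < Suc J" for x using hom_lt[OF chi] by blast
  have ne: "x < n \<Longrightarrow> fst chi x \<noteq> j" for x using nj by auto
  have inj: "inj_on (fst chi) {..<n}" using chi unfolding hom_iff by blast
  have "psi \<in> hom n J"
    unfolding hom_iff
  proof (intro conjI)
    show "inj_on (fst psi) {..<n}"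
    proof (rule inj_onI)
      fix x y assume "x \<in> {..<n}" "y \<in> {..<n}" "fst psi x = fst psi y"
      then have "fst chi x = fst chi y" using ne[of x] ne[of y]
        by (auto simp: psi_def u_def split: if_splits)
      then show "x = y" using inj \<open>x \<in> {..<n}\<close> \<open>y \<in> {..<n}\<close> by (auto dest: inj_onD)
    qed
    show "fst psi ` {..<n} \<subseteq> {..<J}"
      using lt ne jJ by (fastforce simp: psi_def u_def)
    show "\<forall>x\<ge>n. fst psi x = 0" by (simp add: psi_def)
    show "\<forall>x\<ge>n. snd psi x = 0" using chi unfolding hom_iff by (simp add: psi_def)
  qed
  moreover have "comp n (sk j J) psi = chi"
  proof -
    have f: "fst (comp n (sk j J) psi) x = fst chi x" for x
    proof (cases "x < n")
      case True
      then show ?thesis using lt[OF True] ne[OF True] jJ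
        by (auto simp: comp_def sk_def psi_def u_def)
    next
      case False then show ?thesis using chi unfolding hom_iff by (simp add: comp_def)
    qed
    have g: "snd (comp n (sk j J) psi) x = snd chi x" for x
      using chi unfolding hom_iff by (simp add: comp_def sk_def psi_def)
    show ?thesis using f g by (simp add: prod_eq_iff fun_eq_iff)
  qed
  ultimately show ?thesis by blast
qed

lemma P_N:
  fixes C :: "nat \<Rightarrow> 'v set" and p :: "nat \<times> 'v \<times> ('g::group_add) morph \<Rightarrow> 'k::comm_ring_1"
  shows "p \<in> Pcar C (j + a) \<Longrightarrow>
    (\<forall>n v phi. p (n, v, phi) \<noteq> 0 \<longrightarrow> (\<exists>b. j \<le> b \<and> b < j + a \<and> b \<notin> fst phi ` {..<n})) \<Longrightarrow>
    p \<in> fst (snd ((Dop ^^ a) (Pcar C, (\<lambda>_. {0}), indact (\<lambda>n. n)))) j"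
proof (induction a arbitrary: j p)
  case 0
  have "p t = 0" for t
  proof (rule ccontr)
    assume a: "p t \<noteq> 0"
    obtain n v phi where tt: "t = (n, v, phi)" by (cases t)
    then obtain b where "j \<le> b" "b < j + 0" using 0(2) a by blast
    then show False by simp
  qed
  then have "p = 0" by (simp add: fun_eq_iff)
  then show ?case by simp
next
  case (Suc a)
  define J where "J = j + a"
  have pP: "p \<in> Pcar C (Suc J)" using Suc.prems(1) by (simp add: J_def)
  have fin: "finite {t. p t \<noteq> 0}" and pv: "\<And>n v phi. p (n, v, phi) \<noteq> 0 \<Longrightarrow> v \<in> C n \<and> phi \<in> hom n (Suc J)"
    using pP by (auto simp: Pcar_def)
  define p1 where "p1 = (\<lambda>t. if j \<in> fst (snd (snd t)) ` {..<fst t} then p t else 0)"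
  define p2 where "p2 = (\<lambda>t. if j \<in> fst (snd (snd t)) ` {..<fst t} then 0 else p t)"
  have psum: "p = p1 + p2" by (simp add: p1_def p2_def fun_eq_iff)
  have p1N: "p1 \<in> fst (snd ((Dop ^^ a) (Pcar C, (\<lambda>_. {0}), indact (\<lambda>n. n)))) (Suc j)"
  proof (rule Suc.IH)
    show "p1 \<in> Pcar C (Suc j + a)"
      unfolding Pcar_def using pv
      by (auto simp: p1_def J_def intro: finite_subset[OF _ fin] split: if_splits)
    show "\<forall>n v phi. p1 (n, v, phi) \<noteq> 0 \<longrightarrow> (\<exists>b\<ge>Suc j. b < Suc j + a \<and> b \<notin> fst phi ` {..<n})"
    proof (intro allI impI)
      fix n v phi assume "p1 (n, v, phi) \<noteq> 0"
      then have j: "j \<in> fst phi ` {..<n}" and "p (n, v, phi) \<noteq> 0" by (auto simp: p1_def split: if_splits)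
      then obtain b where "j \<le> b" "b < j + Suc a" "b \<notin> fst phi ` {..<n}" using Suc.prems(2) by blast
      moreover have "b \<noteq> j" using j \<open>b \<notin> fst phi ` {..<n}\<close> by auto
      ultimately show "\<exists>b\<ge>Suc j. b < Suc j + a \<and> b \<notin> fst phi ` {..<n}" by (intro exI[of _ b]) auto
    qed
  qed
  define q where "q = (\<lambda>(n, v, psi). if psi \<in> hom n J then p (n, v, comp n (sk j J) psi) else (0::'k))"
  have skh: "sk j J \<in> hom J (Suc J)" by (rule sk_hom)
  have qP: "q \<in> Pcar C J"
  proof -
    define f where "f = (\<lambda>(n::nat, v::'v, psi::'g morph). (n, v, comp n (sk j J) psi))"
    have sub: "f ` {t. q t \<noteq> 0} \<subseteq> {t. p t \<noteq> 0}" by (auto simp: f_def q_def split: if_splits)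
    have "inj_on f {t. q t \<noteq> 0}"
    proof (rule inj_onI)
      fix x y assume x: "x \<in> {t. q t \<noteq> 0}" and y: "y \<in> {t. q t \<noteq> 0}" and e: "f x = f y"
      obtain n v psi where xx: "x = (n, v, psi)" by (cases x)
      obtain n' v' psi' where yy: "y = (n', v', psi')" by (cases y)
      have h: "psi \<in> hom n J" "psi' \<in> hom n' J" using x y by (auto simp: xx yy q_def split: if_splits)
      have "n = n'" "v = v'" "comp n (sk j J) psi = comp n (sk j J) psi'" using e by (auto simp: f_def xx yy)
      then show "x = y" using comp_cancel[OF skh h(1)] h(2) by (simp add: xx yy)
    qed
    then have "finite {t. q t \<noteq> 0}" using finite_subset[OF sub fin] by (rule finite_imageD[rotated])
    moreover have "v \<in> C n \<and> psi \<in> hom n J" if "q (n, v, psi) \<noteq> 0" for n v psi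
      using that pv by (auto simp: q_def split: if_splits)
    ultimately show ?thesis by (simp add: Pcar_def)
  qed
  have p2q: "indact (\<lambda>n. n) J (Suc J) (sk j J) q = p2"
  proof
    fix t :: "nat \<times> 'v \<times> 'g morph"
    obtain n v chi where tt: "t = (n, v, chi)" by (cases t)
    let ?F = "{psi \<in> hom n J. comp n (sk j J) psi = chi}"
    have val: "q (n, v, psi) = p2 (n, v, chi)" if "psi \<in> ?F" for psi
    proof -
      have h: "psi \<in> hom n J" and c: "comp n (sk j J) psi = chi" using that by auto
      have "j \<notin> fst chi ` {..<n}"
      proof
        assume "j \<in> fst chi ` {..<n}"
        then obtain x where x: "x < n" "fst chi x = j" by auto
        have "fst chi x = fst (sk j J :: 'g morph) (fst psi x)" using x(1) unfolding c[symmetric] by (simp add: comp_def)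
        moreover have "fst (sk j J :: 'g morph) (fst psi x) \<noteq> j" by (rule sk_never[OF hom_lt[OF h x(1)]])
        ultimately show False using x by simp
      qed
      then show ?thesis using h c by (simp add: q_def p2_def)
    qed
    show "indact (\<lambda>n. n) J (Suc J) (sk j J) q t = p2 t"
    proof (cases "p2 (n, v, chi) = 0")
      case True
      then show ?thesis using val by (simp add: tt indact_def)
    next
      case False
      then have nj: "j \<notin> fst chi ` {..<n}" and pc: "p (n, v, chi) \<noteq> 0"
        by (auto simp: p2_def split: if_splits)
      have chi: "chi \<in> hom n (Suc J)" using pv[OF pc] by blast
      obtain psi0 where psi0: "psi0 \<in> hom n J" "comp n (sk j J) psi0 = chi"
        using unsk[OF chi nj] J_def by auto
      have "?F = {psi0}" using psi0 comp_cancel[OF skh] by blast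
      then show ?thesis using val[of psi0] psi0 by (simp add: tt indact_def)
    qed
  qed
  have "Sig a j (Suc j) (incl j) = (sk j J :: 'g morph)"
    unfolding incl_sk J_def by (rule Sig_sk) simp
  then have "p2 \<in> (\<lambda>x. indact (\<lambda>n. n) (j + a) (Suc j + a) (Sig a j (Suc j) (incl j)) x) ` Pcar C (j + a)"
    using qP p2q J_def indact_l by (metis image_eqI)
  then show ?case
    unfolding Dop_pow_N_Suc setplus_def snd_conv fst_conv using p1N psum by blast
qed




context
  fixes sc :: "'k::comm_ring_1 \<Rightarrow> 'v::ab_group_add \<Rightarrow> 'v"
    and C :: "nat \<Rightarrow> 'v set"
    and act :: "nat \<Rightarrow> nat \<Rightarrow> ('g::group_add) morph \<Rightarrow> 'v \<Rightarrow> 'v"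
  assumes V: "fig_module sc C act"
begin

lemma Pproj_add: "finite {t. p t \<noteq> 0} \<Longrightarrow> finite {t. q t \<noteq> 0} \<Longrightarrow>
   Pproj sc act j (p + q) = Pproj sc act j p + Pproj sc act j q"
  unfolding Pproj_lext[OF V] by (rule lext_add[OF V_module[OF V]])

lemma Pproj_fsc: "finite {t. p t \<noteq> 0} \<Longrightarrow> Pproj sc act j (fsc c p) = sc c (Pproj sc act j p)"
  unfolding Pproj_lext[OF V] by (rule lext_fsc[OF V_module[OF V]])

lemma Pproj_diff: "finite {t. p t \<noteq> 0} \<Longrightarrow> finite {t. q t \<noteq> 0} \<Longrightarrow>
   Pproj sc act j (p - q) = Pproj sc act j p - Pproj sc act j q"
  unfolding Pproj_lext[OF V] by (rule lext_diff[OF V_module[OF V]])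

lemma Pproj_zero: "Pproj sc act j 0 = 0"
  unfolding Pproj_lext[OF V] by (rule lext_zero[OF V_module[OF V]])

lemma Pproj_sum: "(\<And>i. i \<in> A \<Longrightarrow> finite {t. f i t \<noteq> 0}) \<Longrightarrow>
   Pproj sc act j (\<Sum>i\<in>A. f i) = (\<Sum>i\<in>A. Pproj sc act j (f i))"
  unfolding Pproj_lext[OF V] by (rule lext_sum[OF V_module[OF V]])

lemma Pproj_RPrel:
  assumes "p \<in> RPrel sc I (\<lambda>n. n) C (\<lambda>i. act i i) j"
  shows "Pproj sc act j p = 0"
proof -
  let ?G = "{delta (i, w + w', phi) - delta (i, w, phi) - delta (i, w', phi) | i w w' phi.
            i \<in> I \<and> w \<in> C i \<and> w' \<in> C i \<and> phi \<in> hom i j}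
     \<union> {delta (i, sc c w, phi) - fsc c (delta (i, w, phi)) | i c w phi.
            i \<in> I \<and> w \<in> C i \<and> phi \<in> hom i j}
     \<union> {delta (i, act i i s w, phi) - delta (i, w, comp i phi s) | i s w phi.
            i \<in> I \<and> s \<in> hom i i \<and> w \<in> C i \<and> phi \<in> hom i j}"
  have p: "p \<in> module.span fsc ?G" using assms by (simp add: RPrel_def)
  have gen: "finite {t. g t \<noteq> 0} \<and> Pproj sc act j g = 0" if "g \<in> ?G" for g
  proof -
    have fd: "finite {t. (delta a :: _ \<Rightarrow> 'k) t \<noteq> 0}" for a by (rule finite_supp_delta)
    from that consider
      (a) i w w' phi where "g = delta (i, w + w', phi) - delta (i, w, phi) - delta (i, w', phi)"
          "i \<in> I" "w \<in> C i" "w' \<in> C i" "phi \<in> hom i j"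
    | (b) i c w phi where "g = delta (i, sc c w, phi) - fsc c (delta (i, w, phi))"
          "i \<in> I" "w \<in> C i" "phi \<in> hom i j"
    | (c) i s w phi where "g = delta (i, act i i s w, phi) - delta (i, w, comp i phi s)"
          "i \<in> I" "s \<in> hom i i" "w \<in> C i" "phi \<in> hom i j"
      by blast
    then show ?thesis
    proof cases
      case a
      have f1: "finite {t. (delta (i, w + w', phi) - delta (i, w, phi) :: _ \<Rightarrow> 'k) t \<noteq> 0}"
        by (rule finite_supp_diff[OF fd fd])
      have "Pproj sc act j g = Pproj sc act j (delta (i, w + w', phi) - delta (i, w, phi)) - Pproj sc act j (delta (i, w', phi))"
        unfolding a(1) by (rule Pproj_diff[OF f1 fd])
      also have "\<dots> = act i j phi (w + w') - act i j phi w - act i j phi w'"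
        by (simp only: Pproj_diff[OF fd fd] Pproj_delta[OF V])
      also have "\<dots> = 0" using V_add[OF V a(5,3,4)] by simp
      finally show ?thesis unfolding a(1) using finite_supp_diff[OF f1 fd] by blast
    next
      case b
      have f1: "finite {t. (fsc c (delta (i, w, phi)) :: _ \<Rightarrow> 'k) t \<noteq> 0}"
        by (rule finite_supp_fsc[OF fd])
      have "Pproj sc act j g = Pproj sc act j (delta (i, sc c w, phi)) - Pproj sc act j (fsc c (delta (i, w, phi)))"
        unfolding b(1) by (rule Pproj_diff[OF fd f1])
      also have "\<dots> = act i j phi (sc c w) - sc c (act i j phi w)"
        by (simp only: Pproj_fsc[OF fd] Pproj_delta[OF V])
      also have "\<dots> = 0" using V_scale[OF V b(4,3)] by simp
      finally show ?thesis unfolding b(1) using finite_supp_diff[OF fd f1] by blast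
    next
      case c
      have "Pproj sc act j g = Pproj sc act j (delta (i, act i i s w, phi)) - Pproj sc act j (delta (i, w, comp i phi s))"
        unfolding c(1) by (rule Pproj_diff[OF fd fd])
      also have "\<dots> = act i j phi (act i i s w) - act i j (comp i phi s) w"
        by (simp only: Pproj_delta[OF V])
      also have "\<dots> = 0" using V_comp[OF V c(3,5,4)] by simp
      finally show ?thesis unfolding c(1)
        using finite_supp_diff[OF fd[of "(i, act i i s w, phi)"] fd[of "(i, w, comp i phi s)"]] by blast
    qed
  qed
  have "finite {t. p t \<noteq> 0} \<and> Pproj sc act j p = 0"
  proof (rule module.span_induct_alt[OF module_fsc p, where h="\<lambda>p. finite {t. p t \<noteq> 0} \<and> Pproj sc act j p = 0"])
    show "finite {t. (0 :: _ \<Rightarrow> 'k) t \<noteq> 0} \<and> Pproj sc act j 0 = 0" by (simp add: Pproj_zero)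
  next
    fix c x y assume x: "x \<in> ?G" and y: "finite {t. y t \<noteq> 0} \<and> Pproj sc act j y = 0"
    have fx: "finite {t. x t \<noteq> 0}" and px: "Pproj sc act j x = 0" using gen[OF x] by auto
    have fcx: "finite {t. fsc c x t \<noteq> 0}" by (rule finite_supp_fsc[OF fx])
    show "finite {t. (fsc c x + y) t \<noteq> 0} \<and> Pproj sc act j (fsc c x + y) = 0"
      using y fx px fcx finite_supp_add[OF fcx, of y]
      by (simp add: Pproj_add Pproj_fsc module.scale_zero_right[OF V_module[OF V]])
  qed
  then show ?thesis by blast
qed

end




lemma setplus_0: "setplus A {0} = A"
  by (auto simp: setplus_def)

definition R0 :: "('k::comm_ring_1 \<Rightarrow> 'v::ab_group_add \<Rightarrow> 'v) \<Rightarrow> (nat \<Rightarrow> 'v set)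
   \<Rightarrow> (nat \<Rightarrow> nat \<Rightarrow> ('g::group_add) morph \<Rightarrow> 'v \<Rightarrow> 'v) \<Rightarrow> nat \<Rightarrow> nat \<Rightarrow> 'v \<Rightarrow> (nat \<times> 'v \<times> 'g morph \<Rightarrow> 'k)" where
  "R0 sc C act m n v = (if n \<le> m then delta (n, v, idm n)
      else (SOME p. p \<in> RPcar {..m} (\<lambda>n. n) C n \<and> Pproj sc act n p = v))"

definition RT :: "('k::comm_ring_1 \<Rightarrow> 'v::ab_group_add \<Rightarrow> 'v) \<Rightarrow> (nat \<Rightarrow> 'v set)
   \<Rightarrow> (nat \<Rightarrow> nat \<Rightarrow> ('g::group_add) morph \<Rightarrow> 'v \<Rightarrow> 'v) \<Rightarrow> nat \<Rightarrow> nat \<times> 'v \<times> 'g morph \<Rightarrow> (nat \<times> 'v \<times> 'g morph \<Rightarrow> 'k)" where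
  "RT sc C act m t = indact (\<lambda>n. n) (fst t) 0 (snd (snd t)) (R0 sc C act m (fst t) (fst (snd t)))"

definition rr :: "('k::comm_ring_1 \<Rightarrow> 'v::ab_group_add \<Rightarrow> 'v) \<Rightarrow> (nat \<Rightarrow> 'v set)
   \<Rightarrow> (nat \<Rightarrow> nat \<Rightarrow> ('g::group_add) morph \<Rightarrow> 'v \<Rightarrow> 'v) \<Rightarrow> nat \<Rightarrow> (nat \<times> 'v \<times> 'g morph \<Rightarrow> 'k) \<Rightarrow> (nat \<times> 'v \<times> 'g morph \<Rightarrow> 'k)" where
  "rr sc C act m p = lext fsc (RT sc C act m) p"

context
  fixes sc :: "'k::comm_ring_1 \<Rightarrow> 'v::ab_group_add \<Rightarrow> 'v"
    and C :: "nat \<Rightarrow> 'v set"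
    and act :: "nat \<Rightarrow> nat \<Rightarrow> ('g::group_add) morph \<Rightarrow> 'v \<Rightarrow> 'v"
    and m :: nat
  assumes V: "fig_module sc C act"
    and G: "generated_in_degree sc C act m"
begin

lemma gen_span: "v \<in> C j \<Longrightarrow> v \<in> module.span sc {act n j phi x | n x phi. n \<le> m \<and> x \<in> C n \<and> phi \<in> hom n j}"
  using G unfolding generated_in_degree_def gen_sqm_def prod.case setplus_0 by blast

lemma surj:
  assumes v: "v \<in> C j"
  shows "\<exists>p \<in> RPcar {..m} (\<lambda>n. n) C j. Pproj sc act j p = v"
proof (rule module.span_induct_alt[OF V_module[OF V] gen_span[OF v], where h="\<lambda>v. \<exists>p \<in> RPcar {..m} (\<lambda>n. n) C j. Pproj sc act j p = v"])
  show "\<exists>p \<in> RPcar {..m} (\<lambda>n. n) C j. Pproj sc act j p = 0"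
    using RPcar_zero Pproj_zero[OF V] by blast
next
  fix c x y
  assume x: "x \<in> {act n j phi x | n x phi. n \<le> m \<and> x \<in> C n \<and> phi \<in> hom n j}"
    and y: "\<exists>p \<in> RPcar {..m} (\<lambda>n. n) C j. Pproj sc act j p = y"
  obtain n w phi where xx: "x = act n j phi w" "n \<le> m" "w \<in> C n" "phi \<in> hom n j" using x by blast
  obtain q where q: "q \<in> RPcar {..m} (\<lambda>n. n) C j" "Pproj sc act j q = y" using y by blast
  have d: "delta (n, w, phi) \<in> RPcar {..m} (\<lambda>n. n) C j" using xx by (intro RPcar_delta) auto
  have fq: "finite {t. q t \<noteq> 0}" using q(1) by (simp add: RPcar_iff)
  have fd: "finite {t. fsc c (delta (n, w, phi)) t \<noteq> (0::'k)}" by (intro finite_supp_fsc finite_supp_delta)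
  have "fsc c (delta (n, w, phi)) + q \<in> RPcar {..m} (\<lambda>n. n) C j"
    using d q(1) by (intro RPcar_add RPcar_fsc)
  moreover have "Pproj sc act j (fsc c (delta (n, w, phi)) + q) = sc c x + y"
  proof -
    have "Pproj sc act j (fsc c (delta (n, w, phi)) + q) = Pproj sc act j (fsc c (delta (n, w, phi))) + Pproj sc act j q"
      by (rule Pproj_add[OF V fd fq])
    also have "\<dots> = sc c x + y"
      by (simp only: Pproj_fsc[OF V finite_supp_delta] Pproj_delta[OF V] q(2) xx(1))
    finally show ?thesis .
  qed
  ultimately show "\<exists>p \<in> RPcar {..m} (\<lambda>n. n) C j. Pproj sc act j p = sc c x + y" by blast
qed

lemma R0:
  assumes v: "v \<in> C n"
  shows "R0 sc C act m n v \<in> RPcar {..m} (\<lambda>n. n) C n \<and> Pproj sc act n (R0 sc C act m n v) = v"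
proof (cases "n \<le> m")
  case True
  then show ?thesis using v
    by (auto simp: R0_def Pproj_delta[OF V] V_idm[OF V] intro!: RPcar_delta idm_hom)
next
  case False
  have ex: "\<exists>p. p \<in> RPcar {..m} (\<lambda>n. n) C n \<and> Pproj sc act n p = v" using surj[OF v] by blast
  show ?thesis using False someI_ex[OF ex] by (simp add: R0_def)
qed

lemma RT_in:
  assumes "fst (snd t) \<in> C (fst t)" "snd (snd t) \<in> hom (fst t) J"
  shows "RT sc C act m t \<in> RPcar {..m} (\<lambda>n. n) C J"
  unfolding RT_def indact_l[of _ _ 0 J]
  by (rule indact_RPcar[OF conjunct1[OF R0[OF assms(1)]] assms(2)])

lemma RT_small:
  assumes "fst t \<le> m" "snd (snd t) \<in> hom (fst t) J"
  shows "RT sc C act m t = delta t"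
proof -
  obtain n v phi where tt: "t = (n, v, phi)" by (cases t)
  have h: "phi \<in> hom n J" using assms tt by simp
  have "RT sc C act m t = indact (\<lambda>n. n) n J phi (delta (n, v, idm n))"
    using assms(1) by (simp add: RT_def R0_def tt indact_l[of _ _ 0 J])
  also have "\<dots> = delta (n, v, comp n phi (idm n))" by (rule indact_delta[OF h idm_hom])
  also have "\<dots> = delta t" using comp_idm_right[OF h] tt by simp
  finally show ?thesis .
qed

lemma rr_sum: "finite {t. p t \<noteq> 0} \<Longrightarrow> rr sc C act m p = (\<Sum>t\<in>{t. p t \<noteq> 0}. fsc (p t) (RT sc C act m t))"
  by (simp add: rr_def lext_def)

lemma rr_in: assumes p: "p \<in> Pcar C J" shows "rr sc C act m p \<in> RPcar {..m} (\<lambda>n. n) C J"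
proof -
  have p': "p \<in> RPcar UNIV (\<lambda>n. n) C J" using p Pcar_RPcar by blast
  show ?thesis
    unfolding rr_def lext_def
    by (intro RPcar_sum RPcar_fsc RT_in) (use RPcar_supp[OF p'] in auto)
qed

lemma rr_id: assumes p: "p \<in> RPcar {..m} (\<lambda>n. n) C J" shows "rr sc C act m p = p"
proof -
  have "rr sc C act m p = (\<Sum>t\<in>{t. p t \<noteq> 0}. fsc (p t) (delta t))"
    unfolding rr_def lext_def
  proof (rule sum.cong[OF refl])
    fix t assume t: "t \<in> {t. p t \<noteq> 0}"
    show "fsc (p t) (RT sc C act m t) = fsc (p t) (delta t)"
      using RT_small[of t J] RPcar_supp[OF p t] by simp
  qed
  also have "\<dots> = p" using RPcar_decomp[OF p] by simp
  finally show ?thesis .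
qed

lemma rr_add: "finite {t. p t \<noteq> 0} \<Longrightarrow> finite {t. q t \<noteq> 0} \<Longrightarrow> rr sc C act m (p + q) = rr sc C act m p + rr sc C act m q"
  unfolding rr_def by (rule lext_add[OF module_fsc])

lemma rr_fsc: "finite {t. p t \<noteq> 0} \<Longrightarrow> rr sc C act m (fsc c p) = fsc c (rr sc C act m p)"
  unfolding rr_def by (rule lext_fsc[OF module_fsc])

lemma rr_Pproj: assumes p: "p \<in> Pcar C J" shows "Pproj sc act J (rr sc C act m p) = Pproj sc act J p"
proof -
  have p': "p \<in> RPcar UNIV (\<lambda>n. n) C J" using p Pcar_RPcar by blast
  let ?S = "{t. p t \<noteq> 0}"
  have fin: "finite ?S" using p' by (simp add: RPcar_iff)
  have inS: "RT sc C act m t \<in> RPcar {..m} (\<lambda>n. n) C J" if "t \<in> ?S" for t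
    using RPcar_supp[OF p' that] by (intro RT_in) auto
  have "Pproj sc act J (rr sc C act m p) = (\<Sum>t\<in>?S. Pproj sc act J (fsc (p t) (RT sc C act m t)))"
    unfolding rr_sum[OF fin]
    by (rule Pproj_sum[OF V]) (intro finite_supp_fsc, use inS in \<open>auto simp: RPcar_iff\<close>)
  also have "\<dots> = (\<Sum>t\<in>?S. sc (p t) (act (fst t) J (snd (snd t)) (fst (snd t))))"
  proof (rule sum.cong[OF refl])
    fix t assume t: "t \<in> ?S"
    have h: "fst (snd t) \<in> C (fst t)" "snd (snd t) \<in> hom (fst t) J" using RPcar_supp[OF p' t] by auto
    have f: "finite {x. RT sc C act m t x \<noteq> 0}" using inS[OF t] by (simp add: RPcar_iff)
    have "Pproj sc act J (RT sc C act m t) = act (fst t) J (snd (snd t)) (fst (snd t))"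
      unfolding RT_def indact_l[of _ _ 0 J]
      using Pproj_natural[OF V conjunct1[OF R0[OF h(1)]] h(2)] conjunct2[OF R0[OF h(1)]] by simp
    then show "Pproj sc act J (fsc (p t) (RT sc C act m t)) = sc (p t) (act (fst t) J (snd (snd t)) (fst (snd t)))"
      using Pproj_fsc[OF V f] by simp
  qed
  also have "\<dots> = Pproj sc act J p"
    unfolding Pproj_def by (rule sum.cong) (auto split: prod.split)
  finally show ?thesis .
qed

lemma rr_natural:
  assumes p: "p \<in> Pcar C J" and psi: "psi \<in> hom J L"
  shows "rr sc C act m (indact (\<lambda>n. n) J L psi p) = indact (\<lambda>n. n) J L psi (rr sc C act m p)"
proof -
  have p': "p \<in> RPcar UNIV (\<lambda>n. n) C J" using p Pcar_RPcar by blast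
  let ?S = "{t. p t \<noteq> 0}"
  have fin: "finite ?S" using p' by (simp add: RPcar_iff)
  have "rr sc C act m (indact (\<lambda>n. n) J L psi p) =
    (\<Sum>t\<in>?S. rr sc C act m (fsc (p t) (delta (fst t, fst (snd t), comp (fst t) psi (snd (snd t))))))"
    unfolding indact_decomp[OF p' psi] rr_def
    by (rule lext_sum[OF module_fsc]) (intro finite_supp_fsc finite_supp_delta)
  also have "\<dots> = (\<Sum>t\<in>?S. fsc (p t) (indact (\<lambda>n. n) J L psi (RT sc C act m t)))"
  proof (rule sum.cong[OF refl])
    fix t assume t: "t \<in> ?S"
    have h: "fst (snd t) \<in> C (fst t)" "snd (snd t) \<in> hom (fst t) J" using RPcar_supp[OF p' t] by auto
    have "rr sc C act m (delta (fst t, fst (snd t), comp (fst t) psi (snd (snd t)))) =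
       indact (\<lambda>n. n) (fst t) 0 (comp (fst t) psi (snd (snd t))) (R0 sc C act m (fst t) (fst (snd t)))"
      unfolding rr_def lext_delta[OF module_fsc] RT_def by simp
    also have "\<dots> = indact (\<lambda>n. n) (fst t) L (comp (fst t) psi (snd (snd t))) (R0 sc C act m (fst t) (fst (snd t)))"
      by (simp only: indact_l[of _ "fst t" 0 L])
    also have "\<dots> = indact (\<lambda>n. n) J L psi (indact (\<lambda>n. n) (fst t) J (snd (snd t)) (R0 sc C act m (fst t) (fst (snd t))))"
      by (rule indact_comp[OF conjunct1[OF R0[OF h(1)]] h(2) psi, symmetric])
    also have "\<dots> = indact (\<lambda>n. n) J L psi (RT sc C act m t)"
      by (simp only: RT_def indact_l[of _ "fst t" 0 J])
    finally show "rr sc C act m (fsc (p t) (delta (fst t, fst (snd t), comp (fst t) psi (snd (snd t))))) =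
        fsc (p t) (indact (\<lambda>n. n) J L psi (RT sc C act m t))"
      by (simp add: rr_fsc[OF finite_supp_delta])
  qed
  also have "\<dots> = indact (\<lambda>n. n) J L psi (rr sc C act m p)"
    unfolding rr_sum[OF fin] by (simp only: indact_sum indact_fsc)
  finally show ?thesis .
qed

end




lemma RPcar_mono: "I \<subseteq> I' \<Longrightarrow> RPcar I d W j \<subseteq> RPcar I' d W j"
  by (auto simp: RPcar_def)

lemma pigeon:
  assumes "inj_on f {..<n}" "n \<le> m"
  shows "\<exists>b. j \<le> b \<and> b < j + Suc m \<and> b \<notin> f ` {..<n}"
proof (rule ccontr)
  assume "\<not> ?thesis"
  then have "{j..<j + Suc m} \<subseteq> f ` {..<n}" by auto
  then have "card {j..<j + Suc m} \<le> card (f ` {..<n})" by (intro card_mono) auto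
  also have "\<dots> = n" using card_image[OF assms(1)] by simp
  finally show False using assms(2) by simp
qed

context
  fixes sc :: "'k::comm_ring_1 \<Rightarrow> 'v::ab_group_add \<Rightarrow> 'v"
    and C :: "nat \<Rightarrow> 'v set"
    and act :: "nat \<Rightarrow> nat \<Rightarrow> ('g::group_add) morph \<Rightarrow> 'v \<Rightarrow> 'v"
    and m :: nat
  assumes V: "fig_module sc C act"
    and G: "generated_in_degree sc C act m"
begin

lemma Tlift:
  assumes x: "x \<in> module.span fsc {indact (\<lambda>n. n) J (Suc J) psi q | psi q. psi \<in> hom J (Suc J) \<and>
      q \<in> {p \<in> Pcar C J. Pproj sc act J p = 0}}"
  shows "x \<in> Pcar C (Suc J) \<and> rr sc C act m x \<in> module.span fsc {indact (\<lambda>n. n) J (Suc J) psi q | psi q.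
      psi \<in> hom J (Suc J) \<and> q \<in> {p \<in> RPcar {..m} (\<lambda>n. n) C J. Pproj sc act J p = (0::'v)}}"
proof (rule module.span_induct_alt[OF module_fsc x, where h="\<lambda>x. x \<in> Pcar C (Suc J) \<and> rr sc C act m x \<in> module.span fsc {indact (\<lambda>n. n) J (Suc J) psi q | psi q.
      psi \<in> hom J (Suc J) \<and> q \<in> {p \<in> RPcar {..m} (\<lambda>n. n) C J. Pproj sc act J p = (0::'v)}}"])
  show "0 \<in> Pcar C (Suc J) \<and> rr sc C act m 0 \<in> module.span fsc {indact (\<lambda>n. n) J (Suc J) psi q | psi q.
      psi \<in> hom J (Suc J) \<and> q \<in> {p \<in> RPcar {..m} (\<lambda>n. n) C J. Pproj sc act J p = (0::'v)}}"
  proof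
    show "0 \<in> Pcar C (Suc J)" by (simp add: Pcar_def)
    have "rr sc C act m 0 = 0" by (simp add: rr_def lext_def)
    then show "rr sc C act m 0 \<in> module.span fsc {indact (\<lambda>n. n) J (Suc J) psi q | psi q.
      psi \<in> hom J (Suc J) \<and> q \<in> {p \<in> RPcar {..m} (\<lambda>n. n) C J. Pproj sc act J p = (0::'v)}}"
      by (simp only: module.span_zero[OF module_fsc])
  qed
next
  fix c x y
  assume x: "x \<in> {indact (\<lambda>n. n) J (Suc J) psi q | psi q. psi \<in> hom J (Suc J) \<and>
      q \<in> {p \<in> Pcar C J. Pproj sc act J p = 0}}"
    and y: "y \<in> Pcar C (Suc J) \<and> rr sc C act m y \<in> module.span fsc {indact (\<lambda>n. n) J (Suc J) psi q | psi q.
      psi \<in> hom J (Suc J) \<and> q \<in> {p \<in> RPcar {..m} (\<lambda>n. n) C J. Pproj sc act J p = (0::'v)}}"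
  obtain psi q where xx: "x = indact (\<lambda>n. n) J (Suc J) psi q" "psi \<in> hom J (Suc J)" "q \<in> Pcar C J"
     "Pproj sc act J q = 0" using x by blast
  have q': "q \<in> RPcar UNIV (\<lambda>n. n) C J" using xx(3) Pcar_RPcar by blast
  have xP: "x \<in> RPcar UNIV (\<lambda>n. n) C (Suc J)" unfolding xx(1) by (rule indact_RPcar[OF q' xx(2)])
  have yP: "y \<in> RPcar UNIV (\<lambda>n. n) C (Suc J)" using y Pcar_RPcar by blast
  have fx: "finite {t. x t \<noteq> 0}" using xP by (simp add: RPcar_iff)
  have fy: "finite {t. y t \<noteq> 0}" using yP by (simp add: RPcar_iff)
  have "fsc c x + y \<in> Pcar C (Suc J)" unfolding Pcar_RPcar using xP yP by (intro RPcar_add RPcar_fsc)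
  moreover have "rr sc C act m (fsc c x + y) = fsc c (rr sc C act m x) + rr sc C act m y"
    by (simp only: rr_add[OF V G finite_supp_fsc[OF fx] fy] rr_fsc[OF V G fx])
  moreover
  let ?U = "module.span fsc {indact (\<lambda>n. n) J (Suc J) psi q | psi q.
      psi \<in> hom J (Suc J) \<and> q \<in> {p \<in> RPcar {..m} (\<lambda>n. n) C J. Pproj sc act J p = (0::'v)}}"
  have rx: "rr sc C act m x = indact (\<lambda>n. n) J (Suc J) psi (rr sc C act m q)"
    unfolding xx(1) by (rule rr_natural[OF V G xx(3) xx(2)])
  have "rr sc C act m q \<in> {p \<in> RPcar {..m} (\<lambda>n. n) C J. Pproj sc act J p = 0}"
    using rr_in[OF V G xx(3)] rr_Pproj[OF V G xx(3)] xx(4) by simp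
  then have rxU: "rr sc C act m x \<in> ?U"
    unfolding rx using xx(2) by (intro module.span_base[OF module_fsc]) blast
  have "fsc c (rr sc C act m x) + rr sc C act m y \<in> ?U"
    using module.span_add[OF module_fsc module.span_scale[OF module_fsc rxU] conjunct2[OF y]] .
  ultimately show "fsc c x + y \<in> Pcar C (Suc J) \<and> rr sc C act m (fsc c x + y) \<in> ?U"
    by (simp only: simp_thms)
qed

end




context
  fixes sc :: "'k::comm_ring_1 \<Rightarrow> 'v::ab_group_add \<Rightarrow> 'v"
    and C :: "nat \<Rightarrow> 'v set"
    and act :: "nat \<Rightarrow> nat \<Rightarrow> ('g::group_add) morph \<Rightarrow> 'v \<Rightarrow> 'v"
    and m :: nat
  assumes V: "fig_module sc C act"
    and G: "generated_in_degree sc C act m"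
begin

lemma G_push:
  assumes psi: "psi \<in> hom J L"
    and y: "y \<in> module.span fsc {indact (\<lambda>n. n) n J phi x | n x phi. n \<le> m \<and>
        x \<in> {p \<in> RPcar {..m} (\<lambda>n. n) C n. Pproj sc act n p = (0::'v)} \<and> phi \<in> hom n J}"
  shows "indact (\<lambda>n. n) J L psi y \<in> module.span fsc {indact (\<lambda>n. n) n L phi x | n x phi. n \<le> m \<and>
        x \<in> {p \<in> RPcar {..m} (\<lambda>n. n) C n. Pproj sc act n p = (0::'v)} \<and> phi \<in> hom n L}"
  (is "_ \<in> ?U")
proof (rule module.span_induct_alt[OF module_fsc y, where h="\<lambda>y. indact (\<lambda>n. n) J L psi y \<in> ?U"])
  show "indact (\<lambda>n. n) J L psi 0 \<in> ?U"
    by (simp only: indact_zero module.span_zero[OF module_fsc])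
next
  fix c x y
  assume x: "x \<in> {indact (\<lambda>n. n) n J phi x | n x phi. n \<le> m \<and>
        x \<in> {p \<in> RPcar {..m} (\<lambda>n. n) C n. Pproj sc act n p = (0::'v)} \<and> phi \<in> hom n J}"
    and y: "indact (\<lambda>n. n) J L psi y \<in> ?U"
  obtain n x0 phi where xx: "x = indact (\<lambda>n. n) n J phi x0" "n \<le> m"
     "x0 \<in> RPcar {..m} (\<lambda>n. n) C n" "Pproj sc act n x0 = 0" "phi \<in> hom n J" using x by blast
  have "indact (\<lambda>n. n) J L psi x = indact (\<lambda>n. n) n L (comp n psi phi) x0"
    unfolding xx(1) by (rule indact_comp[OF xx(3) xx(5) psi])
  moreover have "comp n psi phi \<in> hom n L" by (rule hom_comp[OF xx(5) psi])
  ultimately have "indact (\<lambda>n. n) J L psi x \<in> ?U"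
    using xx by (intro module.span_base[OF module_fsc]) blast
  then have "fsc c (indact (\<lambda>n. n) J L psi x) + indact (\<lambda>n. n) J L psi y \<in> ?U"
    using module.span_add[OF module_fsc module.span_scale[OF module_fsc] y] by blast
  then show "indact (\<lambda>n. n) J L psi (fsc c x + y) \<in> ?U"
    by (simp only: indact_add indact_fsc)
qed

lemma KM_gen:
  assumes H: "H1D_vanishes sc C act (Suc m)"
  shows "{p \<in> RPcar {..m} (\<lambda>n. n) C J. Pproj sc act J p = 0} \<subseteq>
     module.span fsc {indact (\<lambda>n. n) n J phi x | n x phi. n \<le> m \<and>
        x \<in> {p \<in> RPcar {..m} (\<lambda>n. n) C n. Pproj sc act n p = (0::'v)} \<and> phi \<in> hom n J}"
proof (induction J)
  have direct: "{p \<in> RPcar {..m} (\<lambda>n. n) C J. Pproj sc act J p = 0} \<subseteq>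
     module.span fsc {indact (\<lambda>n. n) n J phi x | n x phi. n \<le> m \<and>
        x \<in> {p \<in> RPcar {..m} (\<lambda>n. n) C n. Pproj sc act n p = (0::'v)} \<and> phi \<in> hom n J}"
    if "J \<le> m" for J
  proof
    fix p assume p: "p \<in> {p \<in> RPcar {..m} (\<lambda>n. n) C J. Pproj sc act J p = 0}"
    have "indact (\<lambda>n. n) J J (idm J) p = p" by (rule indact_idm[of p "{..m}" C]) (use p in simp)
    then have "p = indact (\<lambda>n. n) J J (idm J) p" by simp
    then show "p \<in> module.span fsc {indact (\<lambda>n. n) n J phi x | n x phi. n \<le> m \<and>
        x \<in> {p \<in> RPcar {..m} (\<lambda>n. n) C n. Pproj sc act n p = (0::'v)} \<and> phi \<in> hom n J}"
      using p that idm_hom by (intro module.span_base[OF module_fsc]) blast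
  qed
  case 0
  show ?case by (rule direct) simp
  case (Suc J')
  show ?case
  proof (cases "Suc J' \<le> m")
    case True then show ?thesis by (rule direct)
  next
    case False
    define j0 where "j0 = J' - m"
    have e1: "j0 + Suc m = Suc J'" and e2: "j0 + m = J'" using False by (auto simp: j0_def)
    let ?Kc = "\<lambda>j. {p \<in> Pcar C j. Pproj sc act j p = (0::'v)}"
    have Ks: "Ksqm sc C act = (?Kc, (\<lambda>_. {0}), indact (\<lambda>n. n))" by (simp add: Ksqm_def)
    have Ps: "(Psqm C :: (_ \<Rightarrow> 'k, 'g) sqm) = (Pcar C, (\<lambda>_. {0}), indact (\<lambda>n. n))" by (simp add: Psqm_def)
    have HH: "\<forall>x \<in> fst ((Dop ^^ Suc m) (Ksqm sc C act)) j0.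
        x \<in> fst (snd ((Dop ^^ Suc m) (Psqm C :: (_ \<Rightarrow> 'k, 'g) sqm))) j0 \<longrightarrow>
        x \<in> fst (snd ((Dop ^^ Suc m) (Ksqm sc C act))) j0"
      using H unfolding H1D_vanishes_def Let_def by blast
    show ?thesis
    proof
      fix p assume p: "p \<in> {p \<in> RPcar {..m} (\<lambda>n. n) C (Suc J'). Pproj sc act (Suc J') p = 0}"
      have pR: "p \<in> RPcar {..m} (\<lambda>n. n) C (Suc J')" and p0: "Pproj sc act (Suc J') p = 0" using p by auto
      have pP: "p \<in> Pcar C (Suc J')" using pR RPcar_mono[of "{..m}" UNIV] Pcar_RPcar by blast
      have in1: "p \<in> fst ((Dop ^^ Suc m) (Ksqm sc C act)) j0"
        unfolding Dop_pow_fst Ks e1 using pP p0 by simp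
      have in2: "p \<in> fst (snd ((Dop ^^ Suc m) (Psqm C :: (_ \<Rightarrow> 'k, 'g) sqm))) j0"
        unfolding Ps
      proof (rule P_N)
        show "p \<in> Pcar C (j0 + Suc m)" using pP e1 by simp
        show "\<forall>n v phi. p (n, v, phi) \<noteq> 0 \<longrightarrow> (\<exists>b\<ge>j0. b < j0 + Suc m \<and> b \<notin> fst phi ` {..<n})"
        proof (intro allI impI)
          fix n v phi assume "p (n, v, phi) \<noteq> 0"
          then have "n \<le> m" "phi \<in> hom n (Suc J')" using RPcar_supp[OF pR, of "(n, v, phi)"] by simp_all
          then show "\<exists>b\<ge>j0. b < j0 + Suc m \<and> b \<notin> fst phi ` {..<n}"
            using pigeon[of "fst phi" n m j0] unfolding hom_iff by blast
        qed
      qed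
      have "p \<in> fst (snd ((Dop ^^ Suc m) (Ksqm sc C act))) j0" using HH in1 in2 by blast
      then have "p \<in> module.span fsc {indact (\<lambda>n. n) J' (Suc J') psi q | psi q.
          psi \<in> hom J' (Suc J') \<and> q \<in> ?Kc J'}"
        using K_N[of m ?Kc j0] unfolding Ks e2 by blast
      from Tlift[OF V G this] have "rr sc C act m p \<in> module.span fsc {indact (\<lambda>n. n) J' (Suc J') psi q | psi q.
          psi \<in> hom J' (Suc J') \<and> q \<in> {p \<in> RPcar {..m} (\<lambda>n. n) C J'. Pproj sc act J' p = (0::'v)}}"
        by blast
      then have pU: "p \<in> module.span fsc {indact (\<lambda>n. n) J' (Suc J') psi q | psi q.
          psi \<in> hom J' (Suc J') \<and> q \<in> {p \<in> RPcar {..m} (\<lambda>n. n) C J'. Pproj sc act J' p = (0::'v)}}"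
        using rr_id[OF V G pR] by simp
      have "module.span fsc {indact (\<lambda>n. n) J' (Suc J') psi q | psi q.
          psi \<in> hom J' (Suc J') \<and> q \<in> {p \<in> RPcar {..m} (\<lambda>n. n) C J'. Pproj sc act J' p = (0::'v)}}
        \<subseteq> module.span fsc {indact (\<lambda>n. n) n (Suc J') phi x | n x phi. n \<le> m \<and>
        x \<in> {p \<in> RPcar {..m} (\<lambda>n. n) C n. Pproj sc act n p = (0::'v)} \<and> phi \<in> hom n (Suc J')}"
      proof (rule module.span_minimal[OF module_fsc _ module.subspace_span[OF module_fsc]])
        show "{indact (\<lambda>n. n) J' (Suc J') psi q | psi q.
          psi \<in> hom J' (Suc J') \<and> q \<in> {p \<in> RPcar {..m} (\<lambda>n. n) C J'. Pproj sc act J' p = (0::'v)}}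
          \<subseteq> module.span fsc {indact (\<lambda>n. n) n (Suc J') phi x | n x phi. n \<le> m \<and>
        x \<in> {p \<in> RPcar {..m} (\<lambda>n. n) C n. Pproj sc act n p = (0::'v)} \<and> phi \<in> hom n (Suc J')}"
        proof
          fix z assume "z \<in> {indact (\<lambda>n. n) J' (Suc J') psi q | psi q.
            psi \<in> hom J' (Suc J') \<and> q \<in> {p \<in> RPcar {..m} (\<lambda>n. n) C J'. Pproj sc act J' p = (0::'v)}}"
          then obtain psi q where z: "z = indact (\<lambda>n. n) J' (Suc J') psi q" "psi \<in> hom J' (Suc J')"
            "q \<in> {p \<in> RPcar {..m} (\<lambda>n. n) C J'. Pproj sc act J' p = (0::'v)}" by blast
          show "z \<in> module.span fsc {indact (\<lambda>n. n) n (Suc J') phi x | n x phi. n \<le> m \<and>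
            x \<in> {p \<in> RPcar {..m} (\<lambda>n. n) C n. Pproj sc act n p = (0::'v)} \<and> phi \<in> hom n (Suc J')}"
            unfolding z(1) by (rule G_push[OF z(2)]) (use Suc.IH z(3) in blast)
        qed
      qed
      then show "p \<in> module.span fsc {indact (\<lambda>n. n) n (Suc J') phi x | n x phi. n \<le> m \<and>
        x \<in> {p \<in> RPcar {..m} (\<lambda>n. n) C n. Pproj sc act n p = (0::'v)} \<and> phi \<in> hom n (Suc J')}"
        using pU by blast
    qed
  qed
qed

end




lemma part1:
  fixes sc :: "'k::comm_ring_1 \<Rightarrow> 'v::ab_group_add \<Rightarrow> 'v"
    and C :: "nat \<Rightarrow> 'v set"
    and act :: "nat \<Rightarrow> nat \<Rightarrow> ('g::group_add) morph \<Rightarrow> 'v \<Rightarrow> 'v"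
  assumes V: "fig_module sc C act" and G: "generated_in_degree sc C act m"
    and H: "H1D_vanishes sc C act (Suc m)"
  shows "related_in_degree sc C act m"
  unfolding related_in_degree_def
proof (intro exI[of _ "{..m}"] exI[of _ "\<lambda>n. n"] exI[of _ C] exI[of _ "\<lambda>i. act i i"] exI[of _ "Pproj sc act"] conjI)
  show "\<forall>i\<in>{..m}. kGn_module sc i (C i) (act i i)"
    unfolding kGn_module_def
    by (intro ballI conjI allI)
      (assumption | rule V_module[OF V] V_sub[OF V] V_closed[OF V] V_add[OF V] V_scale[OF V] V_idm[OF V] V_comp[OF V])+
  show "\<forall>j. \<forall>p\<in>RPcar {..m} (\<lambda>n. n) C j. Pproj sc act j p \<in> C j"
    using Pproj_in[OF V] by blast
  show "\<forall>j. \<forall>p\<in>RPcar {..m} (\<lambda>n. n) C j. \<forall>q\<in>RPcar {..m} (\<lambda>n. n) C j.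
      Pproj sc act j (p + q) = Pproj sc act j p + Pproj sc act j q"
    using Pproj_add[OF V] by (simp add: RPcar_iff)
  show "\<forall>j c. \<forall>p\<in>RPcar {..m} (\<lambda>n. n) C j. Pproj sc act j (fsc c p) = sc c (Pproj sc act j p)"
    using Pproj_fsc[OF V] by (simp add: RPcar_iff)
  show "\<forall>j. \<forall>p\<in>RPrel sc {..m} (\<lambda>n. n) C (\<lambda>i. act i i) j. Pproj sc act j p = 0"
    using Pproj_RPrel[OF V] by blast
  show "\<forall>n l phi. phi \<in> hom n l \<longrightarrow> (\<forall>p\<in>RPcar {..m} (\<lambda>n. n) C n.
      Pproj sc act l (indact (\<lambda>n. n) n l phi p) = act n l phi (Pproj sc act n p))"
    using Pproj_natural[OF V] by blast
  show "\<forall>j. Pproj sc act j ` RPcar {..m} (\<lambda>n. n) C j = C j"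
  proof
    fix j
    show "Pproj sc act j ` RPcar {..m} (\<lambda>n. n) C j = C j"
      using Pproj_in[OF V] surj[OF V G] by (auto simp: image_iff) (metis (no_types))
  qed
  show "gen_sqm fsc (\<lambda>j. {p \<in> RPcar {..m} (\<lambda>n. n) C j. Pproj sc act j p = 0},
      RPrel sc {..m} (\<lambda>n. n) C (\<lambda>i. act i i), indact (\<lambda>n. n)) m"
    unfolding gen_sqm_def prod.case
  proof (intro allI subsetI)
    fix j p assume p: "p \<in> {p \<in> RPcar {..m} (\<lambda>n. n) C j. Pproj sc act j p = 0}"
    have "p \<in> module.span fsc {indact (\<lambda>n. n) n j phi x | n x phi. n \<le> m \<and>
        x \<in> {p \<in> RPcar {..m} (\<lambda>n. n) C n. Pproj sc act n p = (0::'v)} \<and> phi \<in> hom n j}"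
      using KM_gen[OF V G H] p by blast
    moreover have "0 \<in> RPrel sc {..m} (\<lambda>n. n) C (\<lambda>i. act i i) j"
      unfolding RPrel_def by (rule module.span_zero[OF module_fsc])
    ultimately show pp: "p \<in> setplus (module.span fsc {indact (\<lambda>n. n) n j phi x | n x phi. n \<le> m \<and>
        x \<in> {p \<in> RPcar {..m} (\<lambda>n. n) C n. Pproj sc act n p = 0} \<and> phi \<in> hom n j})
      (RPrel sc {..m} (\<lambda>n. n) C (\<lambda>i. act i i) j)"
      unfolding setplus_def mem_Collect_eq
      by (intro exI[of _ p] exI[of _ 0] conjI) (simp_all only: add_0_right)
  qed
qed

theorem mainTheorem14:
  fixes sc :: "'k::comm_ring_1 \<Rightarrow> 'v::ab_group_add \<Rightarrow> 'v"
    and C :: "nat \<Rightarrow> 'v set"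
    and act :: "nat \<Rightarrow> nat \<Rightarrow> ('g::group_add) morph \<Rightarrow> 'v \<Rightarrow> 'v"
  assumes V: "fig_module sc C act"
  shows "(\<forall>m. generated_in_degree sc C act m \<and> H1D_vanishes sc C act (Suc m)
              \<longrightarrow> related_in_degree sc C act m)
       \<and> ((\<exists>m. generated_in_degree sc C act m) \<and> depth sc C act = \<infinity>
              \<longrightarrow> presented_in_finite_degree sc C act)"
proof (intro conjI allI impI)
  fix m assume "generated_in_degree sc C act m \<and> H1D_vanishes sc C act (Suc m)"
  then show "related_in_degree sc C act m" using part1[OF V] by blast
next
  assume a: "(\<exists>m. generated_in_degree sc C act m) \<and> depth sc C act = \<infinity>"
  then obtain m where g: "generated_in_degree sc C act m" by blast
  have "{a. \<not> H1D_vanishes sc C act (Suc a)} = {}"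
  proof (rule ccontr)
    assume "{a. \<not> H1D_vanishes sc C act (Suc a)} \<noteq> {}"
    then obtain a0 where "a0 \<in> {a. \<not> H1D_vanishes sc C act (Suc a)}" by blast
    then have "depth sc C act \<le> enat a0" unfolding depth_def by (intro Inf_lower) auto
    then show False using a by simp
  qed
  then have "H1D_vanishes sc C act (Suc m)" by blast
  then have "related_in_degree sc C act m" using part1[OF V g] by blast
  then show "presented_in_finite_degree sc C act"
    unfolding presented_in_finite_degree_def using g by blast
qed


end
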